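(* Let $A\in\{V,W,Q\}$ denote one of the three rank-based correlation classes described in the context, and let $S_{A,q}$ be the corresponding centered finite-$L_q$ power-sum statistic. Under $H_0$, for any fixed even integer $q\ge2$, \[ \mathbb E_0(S_{A,q})=0,\qquad \operatorname{var}_0(S_{A,q})=N_p\,v_{A,q,n}. \] Moreover, for fixed even integers $q_1,q_2\ge 2$, \[ \operatorname{cov}_0(S_{A,q_1},S_{A,q_2})=N_p\Big\{\mathbb E_0\big(\widetilde A_{12}^{\,q_1+q_2}\big)-\mathbb E_0\big(\widetilde A_{12}^{\,q_1}\big)\,\mathbb E_0\big(\widetilde A_{12}^{\,q_2}\big)\Big\}. \]
   Context: Let $\bm X=(X_1,\dots,X_p)^\top$ be a random vector with continuous marginal distributions and let $\bm X_i=(X_{i1},\dots,X_{ip})^\top$, $i=1,\dots,n$, be i.i.d. copies of $\bm X$. The null hypothesis is $H_0$: $X_1,\dots,X_p$ are mutually independent; $\mathbb E_0,\operatorname{var}_0,\operatorname{cov}_0,\mathbb P_0$ denote quantities computed under $H_0$. Let $\Lambda_p=\{(s,t):1\le s<t\le p\}$ and $N_p=|\Lambda_p|=\binom p2$. For $(s,t)\in\Lambda_p$ write $\bm X_i^{(st)}=(X_{is},X_{it})^\top$. Class $V$ (simple linear rank statistics): let $R^s_{ni}$ be the rank of $X_{is}$ among $X_{1s},\dots,X_{ns}$; for score functions $f,g:(0,1)\to\mathbb R$, $V_{st}=\frac1n\sum_{i=1}^n f\big(R^s_{ni}/(n+1)\big)g\big(R^t_{ni}/(n+1)\big)$. Rank-based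 U-statistics: let $m\ge2$ be fixed and $h:(\mathbb R^2)^m\to\mathbb R$ be a bounded kernel, symmetric in its $m$ arguments, and rank-based (it depends on its $m$ points in $\mathbb R^2$ only through their coordinate-wise ranks among these $m$ points). Put $U_{h,st}=\binom nm^{-1}\sum_{1\le i_1<\dots<i_m\le n}h(\bm X_{i_1}^{(st)},\dots,\bm X_{i_m}^{(st)})$. For $1\le r\le m$ let $h_r(z_1,\dots,z_r)=\mathbb E_0\{h(z_1,\dots,z_r,\bm Z_{r+1},\dots,\bm Z_m)\}$, where $\bm Z_j$ are i.i.d. copies of $(X_s,X_t)^\top$ under $H_0$. The kernel has degeneracy order $d$ if $h_1=\dots=h_{d-1}=0$ and $h_d\not\equiv0$. Class $W$: $d=1$ and $W_{h,st}=U_{h,st}$. Class $Q$: $d=2$ and $Q_{h,st}=U_{h,st}$. For a generic $A_{st}\in\{V_{st},W_{h,st},Q_{h,st}\}$ set $\widetilde A_{st}=A_{st}-\mathbb E_0(A_{st})$ and, for even $q\ge 2$, $\mu_{A,q,n}=\mathbb E_0(\widetilde A_{12}^{\,q})$, $v_{A,q,n}=\operatorname{var}_0(\widetilde A_{12}^{\,q})$, and \[ S_{A,q}=\sum_{(s,t)\in\Lambda_p}\{\widetilde A_{st}^{\,q}-\mu_{A,q,n}\}. \] *)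

theory Defs
  imports "HOL-Probability.Probability"
begin

text \<open>Data: X i s w is the s-th coordinate of the i-th observation (0-indexed,
  i < n, s < p).\<close>

definition pairs :: "nat \<Rightarrow> (nat \<times> nat) set" where
  "pairs p = {(s, t). s < t \<and> t < p}"

definition rank_of :: "(nat \<Rightarrow> nat \<Rightarrow> 'a \<Rightarrow> real) \<Rightarrow> nat \<Rightarrow> nat \<Rightarrow> nat \<Rightarrow> 'a \<Rightarrow> nat" where
  "rank_of X n i s w = card {j \<in> {..<n}. X j s w \<le> X i s w}"

definition V_stat :: "(real \<Rightarrow> real) \<Rightarrow> (real \<Rightarrow> real) \<Rightarrow> (nat \<Rightarrow> nat \<Rightarrow> 'a \<Rightarrow> real)
    \<Rightarrow> nat \<Rightarrow> nat \<Rightarrow> nat \<Rightarrow> 'a \<Rightarrow> real" where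
  "V_stat f g X n s t w =
     (\<Sum>i<n. f (real (rank_of X n i s w) / real (n + 1)) * g (real (rank_of X n i t w) / real (n + 1)))
       / real n"

definition U_stat :: "((real \<times> real) list \<Rightarrow> real) \<Rightarrow> nat \<Rightarrow> (nat \<Rightarrow> nat \<Rightarrow> 'a \<Rightarrow> real)
    \<Rightarrow> nat \<Rightarrow> nat \<Rightarrow> nat \<Rightarrow> 'a \<Rightarrow> real" where
  "U_stat h m X n s t w =
     (\<Sum>I \<in> {I. I \<subseteq> {..<n} \<and> card I = m}.
        h (map (\<lambda>i. (X i s w, X i t w)) (sorted_list_of_set I))) / real (n choose m)"

definition symmetric_kernel :: "nat \<Rightarrow> ((real \<times> real) list \<Rightarrow> real) \<Rightarrow> bool" where
  "symmetric_kernel m h \<longleftrightarrow>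
     (\<forall>xs ys. length xs = m \<longrightarrow> mset xs = mset ys \<longrightarrow> h xs = h ys)"

text \<open>h depends on its m points only through their coordinate-wise ranks, i.e.
  through the pattern of coordinate-wise comparisons.\<close>
definition rank_based_kernel :: "nat \<Rightarrow> ((real \<times> real) list \<Rightarrow> real) \<Rightarrow> bool" where
  "rank_based_kernel m h \<longleftrightarrow>
     (\<forall>xs ys. length xs = m \<longrightarrow> length ys = m \<longrightarrow>
        (\<forall>j<m. \<forall>k<m. (fst (xs ! j) \<le> fst (xs ! k) \<longleftrightarrow> fst (ys ! j) \<le> fst (ys ! k))
                   \<and> (snd (xs ! j) \<le> snd (xs ! k) \<longleftrightarrow> snd (ys ! j) \<le> snd (ys ! k)))
        \<longrightarrow> h xs = h ys)"

definition bounded_kernel :: "nat \<Rightarrow> ((real \<times> real) list \<Rightarrow> real) \<Rightarrow> bool" where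
  "bounded_kernel m h \<longleftrightarrow> (\<exists>B. \<forall>xs. length xs = m \<longrightarrow> \<bar>h xs\<bar> \<le> B)"

definition proj_kernel :: "nat \<Rightarrow> ((real \<times> real) list \<Rightarrow> real) \<Rightarrow> (real \<times> real) measure
    \<Rightarrow> nat \<Rightarrow> (real \<times> real) list \<Rightarrow> real" where
  "proj_kernel m h mu r zs =
     (\<integral>w. h (zs @ map w [0..<m - r]) \<partial>(PiM {..<m - r} (\<lambda>_. mu)))"

definition degeneracy_order :: "nat \<Rightarrow> ((real \<times> real) list \<Rightarrow> real) \<Rightarrow> (real \<times> real) measure
    \<Rightarrow> nat \<Rightarrow> bool" where
  "degeneracy_order m h mu d \<longleftrightarrow>
     1 \<le> d \<and> d \<le> m \<and>
     (\<forall>r. 1 \<le> r \<and> r < d \<longrightarrow> (\<forall>zs. length zs = r \<longrightarrow> proj_kernel m h mu r zs = 0)) \<and>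
     (\<exists>zs. length zs = d \<and> proj_kernel m h mu d zs \<noteq> 0)"

text \<open>Admissible kernel of degeneracy order d; the H0 law of (X_s, X_t) is the
  product of the marginal laws.\<close>
definition kernel_class :: "'a measure \<Rightarrow> (nat \<Rightarrow> nat \<Rightarrow> 'a \<Rightarrow> real) \<Rightarrow> nat \<Rightarrow> nat
    \<Rightarrow> ((real \<times> real) list \<Rightarrow> real) \<Rightarrow> nat \<Rightarrow> bool" where
  "kernel_class M X p m h d \<longleftrightarrow>
     2 \<le> m \<and> symmetric_kernel m h \<and> rank_based_kernel m h \<and> bounded_kernel m h \<and>
     (\<forall>(s, t) \<in> pairs p.
        degeneracy_order m h (distr M borel (X 0 s) \<Otimes>\<^sub>M distr M borel (X 0 t)) d)"

definition centered :: "'a measure \<Rightarrow> (nat \<Rightarrow> nat \<Rightarrow> 'a \<Rightarrow> real) \<Rightarrow> nat \<Rightarrow> nat \<Rightarrow> 'a \<Rightarrow> real" where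
  "centered M A s t w = A s t w - (\<integral>v. A s t v \<partial>M)"

definition mu_q :: "'a measure \<Rightarrow> (nat \<Rightarrow> nat \<Rightarrow> 'a \<Rightarrow> real) \<Rightarrow> nat \<Rightarrow> real" where
  "mu_q M A q = (\<integral>w. (centered M A 0 1 w) ^ q \<partial>M)"

definition v_q :: "'a measure \<Rightarrow> (nat \<Rightarrow> nat \<Rightarrow> 'a \<Rightarrow> real) \<Rightarrow> nat \<Rightarrow> real" where
  "v_q M A q = (\<integral>w. ((centered M A 0 1 w) ^ q - mu_q M A q)\<^sup>2 \<partial>M)"

definition S_stat :: "'a measure \<Rightarrow> (nat \<Rightarrow> nat \<Rightarrow> 'a \<Rightarrow> real) \<Rightarrow> nat \<Rightarrow> nat \<Rightarrow> 'a \<Rightarrow> real" where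
  "S_stat M A p q w = (\<Sum>(s, t) \<in> pairs p. (centered M A s t w) ^ q - mu_q M A q)"

end

theory Submission
  imports Defs "HOL-Combinatorics.Permutations"
begin

definition Fn :: "nat \<Rightarrow> (nat \<Rightarrow> nat) set" where
  "Fn n = {f. \<forall>x. (x \<in> {..<n} \<longrightarrow> f x \<in> {..n}) \<and> (x \<notin> {..<n} \<longrightarrow> f x = 0)}"

definition Pm :: "nat \<Rightarrow> (nat \<Rightarrow> nat) set" where
  "Pm n = {f \<in> Fn n. bij_betw f {..<n} {1..n}}"

definition rk :: "nat \<Rightarrow> (nat \<Rightarrow> real) \<Rightarrow> nat \<Rightarrow> nat" where
  "rk n x i = (if i < n then card {j \<in> {..<n}. x j \<le> x i} else 0)"

definition wt :: "nat \<Rightarrow> (nat \<Rightarrow> nat) \<Rightarrow> real" where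
  "wt n a = (if a \<in> Pm n then 1 / real (card (Pm n)) else 0)"

definition invG :: "nat \<Rightarrow> ((nat \<Rightarrow> nat) \<Rightarrow> (nat \<Rightarrow> nat) \<Rightarrow> real) \<Rightarrow> bool" where
  "invG n G \<longleftrightarrow> (\<forall>\<tau> x y. \<tau> permutes {..<n} \<longrightarrow> G (x \<circ> \<tau>) (y \<circ> \<tau>) = G x y)"

lemma finite_Fn: "finite (Fn n)"
  unfolding Fn_def by (rule finite_set_of_finite_funs) auto

lemma finite_Pm: "finite (Pm n)"
  using finite_Fn unfolding Pm_def by auto

lemma Pm_sub: "Pm n \<subseteq> Fn n" unfolding Pm_def by auto

lemma rk_in_Fn: "rk n x \<in> Fn n"
proof -
  have "card {j \<in> {..<n}. x j \<le> x i} \<le> n" for i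
    using card_mono[of "{..<n}" "{j \<in> {..<n}. x j \<le> x i}"] by auto
  then show ?thesis unfolding Fn_def rk_def by auto
qed

lemma rk_le_iff:
  assumes "i < n" "j < n"
  shows "x i \<le> x j \<longleftrightarrow> rk n x i \<le> rk n x j"
proof
  assume "x i \<le> x j"
  then have "{k \<in> {..<n}. x k \<le> x i} \<subseteq> {k \<in> {..<n}. x k \<le> x j}" by auto
  then show "rk n x i \<le> rk n x j" using assms unfolding rk_def by (simp add: card_mono)
next
  assume h: "rk n x i \<le> rk n x j"
  show "x i \<le> x j"
  proof (rule ccontr)
    assume "\<not> x i \<le> x j"
    then have "{k \<in> {..<n}. x k \<le> x j} \<subset> {k \<in> {..<n}. x k \<le> x i}" using assms by auto
    then have "card {k \<in> {..<n}. x k \<le> x j} < card {k \<in> {..<n}. x k \<le> x i}"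
      by (intro psubset_card_mono) auto
    then show False using h assms unfolding rk_def by simp
  qed
qed

lemma rk_Pm:
  assumes inj: "inj_on x {..<n}"
  shows "rk n x \<in> Pm n"
proof -
  have pos: "1 \<le> rk n x i" if "i < n" for i
  proof -
    have mem: "i \<in> {j \<in> {..<n}. x j \<le> x i}" using that by auto
    have fin: "finite {j \<in> {..<n}. x j \<le> x i}" by simp
    have "card {j \<in> {..<n}. x j \<le> x i} \<noteq> 0"
      using card_0_eq[OF fin] mem by blast
    then have "1 \<le> card {j \<in> {..<n}. x j \<le> x i}" by linarith
    moreover have "rk n x i = card {j \<in> {..<n}. x j \<le> x i}" using that unfolding rk_def by simp
    ultimately show ?thesis by simp
  qed
  have injr: "inj_on (rk n x) {..<n}"
  proof (rule inj_onI)
    fix i j assume ij: "i \<in> {..<n}" "j \<in> {..<n}" "rk n x i = rk n x j"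
    have "x i \<le> x j" using rk_le_iff[of i n j x] ij by simp
    moreover have "x j \<le> x i" using rk_le_iff[of j n i x] ij by simp
    ultimately have xe: "x i = x j" by simp
    show "i = j" by (rule inj_onD[OF inj xe ij(1) ij(2)])
  qed
  have sub: "rk n x ` {..<n} \<subseteq> {1..n}"
  proof
    fix y assume "y \<in> rk n x ` {..<n}"
    then obtain i where i: "i < n" "y = rk n x i" by auto
    have "rk n x i \<le> n" using rk_in_Fn[of n x] i(1) unfolding Fn_def by simp
    then show "y \<in> {1..n}" using pos[OF i(1)] i(2) by simp
  qed
  have "card (rk n x ` {..<n}) = card {1..n}" using card_image[OF injr] by simp
  then have "rk n x ` {..<n} = {1..n}" using sub by (intro card_subset_eq) auto
  then have "bij_betw (rk n x) {..<n} {1..n}" using injr unfolding bij_betw_def by simp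
  then show ?thesis using rk_in_Fn[of n x] unfolding Pm_def by simp
qed

lemma permutes_lt: "\<tau> permutes {..<n} \<Longrightarrow> i < n \<Longrightarrow> \<tau> i < n"
  using permutes_in_image[of \<tau> "{..<n}" i] by simp

lemma permutes_ge: "\<tau> permutes {..<n} \<Longrightarrow> \<not> i < n \<Longrightarrow> \<tau> i = i"
  using permutes_not_in[of \<tau> "{..<n}" i] by simp

lemma rk_perm:
  assumes t: "\<tau> permutes {..<n}"
  shows "rk n (x \<circ> \<tau>) = rk n x \<circ> \<tau>"
proof
  fix i
  show "rk n (x \<circ> \<tau>) i = (rk n x \<circ> \<tau>) i"
  proof (cases "i < n")
    case True
    have "\<tau> ` {j \<in> {..<n}. x (\<tau> j) \<le> x (\<tau> i)} = {k \<in> {..<n}. x k \<le> x (\<tau> i)}"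
    proof
      show "\<tau> ` {j \<in> {..<n}. x (\<tau> j) \<le> x (\<tau> i)} \<subseteq> {k \<in> {..<n}. x k \<le> x (\<tau> i)}"
        using permutes_lt[OF t] by auto
      show "{k \<in> {..<n}. x k \<le> x (\<tau> i)} \<subseteq> \<tau> ` {j \<in> {..<n}. x (\<tau> j) \<le> x (\<tau> i)}"
      proof
        fix k assume k: "k \<in> {k \<in> {..<n}. x k \<le> x (\<tau> i)}"
        have e: "\<tau> (inv \<tau> k) = k" using permutes_inverses(1)[OF t] .
        have "inv \<tau> k < n" using permutes_lt[OF permutes_inv[OF t]] k by simp
        then show "k \<in> \<tau> ` {j \<in> {..<n}. x (\<tau> j) \<le> x (\<tau> i)}"
          using e k by (intro image_eqI[of k \<tau> "inv \<tau> k"]) auto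
      qed
    qed
    moreover have inj: "inj_on \<tau> {j \<in> {..<n}. x (\<tau> j) \<le> x (\<tau> i)}"
      using permutes_inj[OF t] by (rule inj_on_subset) simp
    ultimately have "card {j \<in> {..<n}. x (\<tau> j) \<le> x (\<tau> i)} = card {k \<in> {..<n}. x k \<le> x (\<tau> i)}"
      using card_image[OF inj] by simp
    then show ?thesis using True permutes_lt[OF t True] unfolding rk_def by simp
  next
    case False
    then show ?thesis using permutes_ge[OF t False] unfolding rk_def by simp
  qed
qed

lemma Fn_comp:
  assumes t: "\<tau> permutes {..<n}" and a: "a \<in> Fn n"
  shows "a \<circ> \<tau> \<in> Fn n"
proof -
  have "(x \<in> {..<n} \<longrightarrow> a (\<tau> x) \<in> {..n}) \<and> (x \<notin> {..<n} \<longrightarrow> a (\<tau> x) = 0)" for x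
  proof (cases "x < n")
    case True
    then have "\<tau> x < n" by (rule permutes_lt[OF t])
    then show ?thesis using a True unfolding Fn_def by auto
  next
    case False
    then have "\<tau> x = x" by (rule permutes_ge[OF t])
    then show ?thesis using a False unfolding Fn_def by auto
  qed
  then show ?thesis unfolding Fn_def by auto
qed

lemma Pm_comp:
  assumes t: "\<tau> permutes {..<n}" and a: "a \<in> Pm n"
  shows "a \<circ> \<tau> \<in> Pm n"
proof -
  have "bij_betw \<tau> {..<n} {..<n}" using t by (rule permutes_imp_bij)
  then have "bij_betw (a \<circ> \<tau>) {..<n} {1..n}" using a unfolding Pm_def
    by (auto intro: bij_betw_trans)
  then show ?thesis using Fn_comp[OF t] a unfolding Pm_def by auto
qed

lemma Pm_comp_iff:
  assumes t: "\<tau> permutes {..<n}"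
  shows "a \<circ> \<tau> \<in> Pm n \<longleftrightarrow> a \<in> Pm n"
proof
  assume "a \<circ> \<tau> \<in> Pm n"
  then have "a \<circ> \<tau> \<circ> inv \<tau> \<in> Pm n" using Pm_comp[OF permutes_inv[OF t]] by blast
  then show "a \<in> Pm n" using permutes_inv_o(1)[OF t] by (simp add: comp_assoc)
qed (rule Pm_comp[OF t])

lemma Pm_trans:
  assumes a: "a \<in> Pm n" and b: "b \<in> Pm n"
  shows "\<exists>\<tau>. \<tau> permutes {..<n} \<and> b = a \<circ> \<tau>"
proof -
  define \<tau> where "\<tau> i = (if i < n then inv_into {..<n} a (b i) else i)" for i
  have ba: "bij_betw a {..<n} {1..n}" "bij_betw b {..<n} {1..n}" using a b unfolding Pm_def by auto
  have bi: "bij_betw (inv_into {..<n} a) {1..n} {..<n}" using bij_betw_inv_into[OF ba(1)] .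
  have "bij_betw (inv_into {..<n} a \<circ> b) {..<n} {..<n}" using bij_betw_trans[OF ba(2) bi] .
  then have "bij_betw \<tau> {..<n} {..<n}"
    by (rule bij_betw_cong[THEN iffD1, rotated]) (auto simp: \<tau>_def)
  then have t: "\<tau> permutes {..<n}" by (rule bij_imp_permutes) (auto simp: \<tau>_def)
  have "b = a \<circ> \<tau>"
  proof
    fix i show "b i = (a \<circ> \<tau>) i"
    proof (cases "i < n")
      case True
      then have "b i \<in> {1..n}" using ba(2) by (auto dest: bij_betwE)
      then show ?thesis using True ba(1) by (simp add: \<tau>_def bij_betw_inv_into_right)
    next
      case False
      then show ?thesis using a b unfolding Pm_def Fn_def by (simp add: \<tau>_def)
    qed
  qed
  then show ?thesis using t by blast
qed

lemma wt_comp: "\<tau> permutes {..<n} \<Longrightarrow> wt n (a \<circ> \<tau>) = wt n a"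
  unfolding wt_def using Pm_comp_iff by simp

lemma sum_Fn_reindex:
  assumes t: "\<tau> permutes {..<n}"
  shows "(\<Sum>y\<in>Fn n. F y) = (\<Sum>y\<in>Fn n. F (y \<circ> \<tau>))"
proof (rule sum.reindex_bij_witness[of _ "\<lambda>y. y \<circ> \<tau>" "\<lambda>y. y \<circ> inv \<tau>"])
  fix y assume y: "y \<in> Fn n"
  show "y \<circ> inv \<tau> \<circ> \<tau> = y" using permutes_inv_o(2)[OF t] by (simp add: comp_assoc)
  show "y \<circ> inv \<tau> \<in> Fn n" using Fn_comp[OF permutes_inv[OF t] y] .
  show "y \<circ> \<tau> \<circ> inv \<tau> = y" using permutes_inv_o(1)[OF t] by (simp add: comp_assoc)
  show "y \<circ> \<tau> \<in> Fn n" using Fn_comp[OF t y] .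
  show "F (y \<circ> inv \<tau> \<circ> \<tau>) = F y" using permutes_inv_o(2)[OF t] by (simp add: comp_assoc)
qed

lemma sum_wt: "(\<Sum>a\<in>Fn n. wt n a) = 1"
proof -
  have "(\<Sum>a\<in>Fn n. wt n a) = (\<Sum>a\<in>Pm n. 1 / real (card (Pm n)))"
    unfolding wt_def using Pm_sub finite_Fn
    by (simp add: sum.If_cases Int_absorb1)
  also have "\<dots> = 1"
  proof -
    have "(\<lambda>i. if i < n then i + 1 else 0) \<in> Pm n"
    proof -
      have "bij_betw (\<lambda>i. i + 1) {..<n} {1..n}"
        by (rule bij_betw_byWitness[of _ "\<lambda>i. i - 1"]) auto
      then have "bij_betw (\<lambda>i. if i < n then i + 1 else 0) {..<n} {1..n}"
        by (rule bij_betw_cong[THEN iffD1, rotated]) auto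
      then show ?thesis unfolding Pm_def Fn_def by auto
    qed
    then have "card (Pm n) \<noteq> 0" using finite_Pm by auto
    then show ?thesis by simp
  qed
  finally show ?thesis .
qed

lemma const_inner:
  assumes G: "invG n G" and a: "a \<in> Pm n" and a': "a' \<in> Pm n"
  shows "(\<Sum>y\<in>Fn n. \<phi> (G a' y) * wt n y) = (\<Sum>y\<in>Fn n. \<phi> (G a y) * wt n y)"
proof -
  obtain \<tau> where t: "\<tau> permutes {..<n}" and e: "a' = a \<circ> \<tau>" using Pm_trans[OF a a'] by blast
  have "(\<Sum>y\<in>Fn n. \<phi> (G a' y) * wt n y) = (\<Sum>y\<in>Fn n. \<phi> (G a' (y \<circ> \<tau>)) * wt n (y \<circ> \<tau>))"
    by (rule sum_Fn_reindex[OF t])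
  also have "\<dots> = (\<Sum>y\<in>Fn n. \<phi> (G a y) * wt n y)"
    using G t wt_comp[OF t] unfolding invG_def e by simp
  finally show ?thesis .
qed

definition E2 :: "nat \<Rightarrow> ((nat \<Rightarrow> nat) \<Rightarrow> (nat \<Rightarrow> nat) \<Rightarrow> real) \<Rightarrow> (real \<Rightarrow> real) \<Rightarrow> real" where
  "E2 n G \<phi> = (\<Sum>a\<in>Fn n. \<Sum>b\<in>Fn n. \<phi> (G a b) * wt n a * wt n b)"

lemma shared_sum:
  assumes G1: "invG n G1" and G2: "invG n G2"
  shows "(\<Sum>a\<in>Fn n. \<Sum>b\<in>Fn n. \<Sum>c\<in>Fn n. \<phi> (G1 a b) * \<psi> (G2 a c) * wt n a * wt n b * wt n c)
       = E2 n G1 \<phi> * E2 n G2 \<psi>"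
proof -
  define a0 :: "nat \<Rightarrow> nat" where "a0 = (\<lambda>i. if i < n then i + 1 else 0)"
  have a0: "a0 \<in> Pm n"
  proof -
    have "bij_betw (\<lambda>i. i + 1) {..<n} {1..n}"
      by (rule bij_betw_byWitness[of _ "\<lambda>i. i - 1"]) auto
    then have "bij_betw a0 {..<n} {1..n}"
      by (rule bij_betw_cong[THEN iffD1, rotated]) (auto simp: a0_def)
    then show ?thesis unfolding Pm_def Fn_def a0_def by auto
  qed
  define K1 where "K1 = (\<Sum>y\<in>Fn n. \<phi> (G1 a0 y) * wt n y)"
  define K2 where "K2 = (\<Sum>y\<in>Fn n. \<psi> (G2 a0 y) * wt n y)"
  have k1: "wt n a * (\<Sum>y\<in>Fn n. \<phi> (G1 a y) * wt n y) = wt n a * K1" for a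
    using const_inner[OF G1 a0, of a \<phi>] unfolding K1_def wt_def by auto
  have k2: "wt n a * (\<Sum>y\<in>Fn n. \<psi> (G2 a y) * wt n y) = wt n a * K2" for a
    using const_inner[OF G2 a0, of a \<psi>] unfolding K2_def wt_def by auto
  have "(\<Sum>a\<in>Fn n. \<Sum>b\<in>Fn n. \<Sum>c\<in>Fn n. \<phi> (G1 a b) * \<psi> (G2 a c) * wt n a * wt n b * wt n c)
     = (\<Sum>a\<in>Fn n. wt n a * (\<Sum>y\<in>Fn n. \<phi> (G1 a y) * wt n y) * (\<Sum>y\<in>Fn n. \<psi> (G2 a y) * wt n y))"
  proof (rule sum.cong[OF refl])
    fix a
    have "wt n a * (\<Sum>y\<in>Fn n. \<phi> (G1 a y) * wt n y) * (\<Sum>y\<in>Fn n. \<psi> (G2 a y) * wt n y)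
      = wt n a * ((\<Sum>y\<in>Fn n. \<phi> (G1 a y) * wt n y) * (\<Sum>y\<in>Fn n. \<psi> (G2 a y) * wt n y))"
      by (simp only: mult.assoc)
    also have "\<dots> = wt n a * (\<Sum>b\<in>Fn n. \<Sum>c\<in>Fn n. (\<phi> (G1 a b) * wt n b) * (\<psi> (G2 a c) * wt n c))"
      by (simp only: sum_product)
    also have "\<dots> = (\<Sum>b\<in>Fn n. \<Sum>c\<in>Fn n. wt n a * ((\<phi> (G1 a b) * wt n b) * (\<psi> (G2 a c) * wt n c)))"
      by (simp only: sum_distrib_left)
    also have "\<dots> = (\<Sum>b\<in>Fn n. \<Sum>c\<in>Fn n. \<phi> (G1 a b) * \<psi> (G2 a c) * wt n a * wt n b * wt n c)"
      by (intro sum.cong refl) (simp only: mult_ac)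
    finally show "(\<Sum>b\<in>Fn n. \<Sum>c\<in>Fn n. \<phi> (G1 a b) * \<psi> (G2 a c) * wt n a * wt n b * wt n c)
      = wt n a * (\<Sum>y\<in>Fn n. \<phi> (G1 a y) * wt n y) * (\<Sum>y\<in>Fn n. \<psi> (G2 a y) * wt n y)" by simp
  qed
  also have "\<dots> = (\<Sum>a\<in>Fn n. wt n a * K1 * K2)"
  proof (rule sum.cong[OF refl])
    fix a
    have "wt n a * (\<Sum>y\<in>Fn n. \<phi> (G1 a y) * wt n y) * (\<Sum>y\<in>Fn n. \<psi> (G2 a y) * wt n y)
        = wt n a * K1 * (\<Sum>y\<in>Fn n. \<psi> (G2 a y) * wt n y)" using k1[of a] by simp
    also have "\<dots> = K1 * (wt n a * (\<Sum>y\<in>Fn n. \<psi> (G2 a y) * wt n y))" by (simp only: mult_ac)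
    also have "\<dots> = K1 * (wt n a * K2)" using k2[of a] by simp
    also have "\<dots> = wt n a * K1 * K2" by (simp only: mult_ac)
    finally show "wt n a * (\<Sum>y\<in>Fn n. \<phi> (G1 a y) * wt n y) * (\<Sum>y\<in>Fn n. \<psi> (G2 a y) * wt n y)
        = wt n a * K1 * K2" .
  qed
  also have "\<dots> = K1 * K2" using sum_wt[of n] by (simp add: sum_distrib_right[symmetric])
  finally have L: "(\<Sum>a\<in>Fn n. \<Sum>b\<in>Fn n. \<Sum>c\<in>Fn n. \<phi> (G1 a b) * \<psi> (G2 a c) * wt n a * wt n b * wt n c) = K1 * K2" .
  have "E2 n G1 \<phi> = (\<Sum>a\<in>Fn n. wt n a * (\<Sum>y\<in>Fn n. \<phi> (G1 a y) * wt n y))"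
    unfolding E2_def by (simp only: sum_distrib_left mult_ac)
  also have "\<dots> = (\<Sum>a\<in>Fn n. wt n a * K1)" using k1 by (intro sum.cong) auto
  also have "\<dots> = K1" using sum_wt[of n] by (simp add: sum_distrib_right[symmetric])
  finally have 1: "E2 n G1 \<phi> = K1" .
  have "E2 n G2 \<psi> = (\<Sum>a\<in>Fn n. wt n a * (\<Sum>y\<in>Fn n. \<psi> (G2 a y) * wt n y))"
    unfolding E2_def by (simp only: sum_distrib_left mult_ac)
  also have "\<dots> = (\<Sum>a\<in>Fn n. wt n a * K2)" using k2 by (intro sum.cong) auto
  also have "\<dots> = K2" using sum_wt[of n] by (simp add: sum_distrib_right[symmetric])
  finally have 2: "E2 n G2 \<psi> = K2" .
  show ?thesis unfolding 1 2 by (rule L)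
qed

lemma disjoint_sum:
  "(\<Sum>a\<in>Fn n. \<Sum>b\<in>Fn n. \<Sum>c\<in>Fn n. \<Sum>d\<in>Fn n. \<phi> (G1 a b) * \<psi> (G2 c d) * wt n a * wt n b * wt n c * wt n d)
       = E2 n G1 \<phi> * E2 n G2 \<psi>"
proof -
  define X where "X a b = \<phi> (G1 a b) * wt n a * wt n b" for a b
  define Y where "Y c d = \<psi> (G2 c d) * wt n c * wt n d" for c d
  have "E2 n G1 \<phi> * E2 n G2 \<psi> = (\<Sum>a\<in>Fn n. \<Sum>b\<in>Fn n. X a b) * (\<Sum>c\<in>Fn n. \<Sum>d\<in>Fn n. Y c d)"
    unfolding E2_def X_def Y_def ..
  also have "\<dots> = (\<Sum>a\<in>Fn n. \<Sum>c\<in>Fn n. (\<Sum>b\<in>Fn n. X a b) * (\<Sum>d\<in>Fn n. Y c d))"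
    by (rule sum_product)
  also have "\<dots> = (\<Sum>a\<in>Fn n. \<Sum>c\<in>Fn n. \<Sum>b\<in>Fn n. \<Sum>d\<in>Fn n. X a b * Y c d)"
    by (simp only: sum_product)
  also have "\<dots> = (\<Sum>a\<in>Fn n. \<Sum>b\<in>Fn n. \<Sum>c\<in>Fn n. \<Sum>d\<in>Fn n. X a b * Y c d)"
    by (rule sum.cong[OF refl], rule sum.swap)
  also have "\<dots> = (\<Sum>a\<in>Fn n. \<Sum>b\<in>Fn n. \<Sum>c\<in>Fn n. \<Sum>d\<in>Fn n. \<phi> (G1 a b) * \<psi> (G2 c d) * wt n a * wt n b * wt n c * wt n d)"
    unfolding X_def Y_def by (intro sum.cong refl) (simp only: mult_ac)
  finally show ?thesis by (rule sym)
qed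

lemma invG_flip: "invG n G \<Longrightarrow> invG n (\<lambda>x y. G y x)"
  unfolding invG_def by auto

lemma E2_flip: "E2 n (\<lambda>x y. G y x) \<phi> = E2 n G \<phi>"
  unfolding E2_def by (subst sum.swap) (intro sum.cong refl, simp only: mult_ac)

definition GV :: "(real \<Rightarrow> real) \<Rightarrow> (real \<Rightarrow> real) \<Rightarrow> nat \<Rightarrow> (nat \<Rightarrow> nat) \<Rightarrow> (nat \<Rightarrow> nat) \<Rightarrow> real" where
  "GV f g n x y = (\<Sum>i<n. f (real (x i) / real (n + 1)) * g (real (y i) / real (n + 1))) / real n"

definition GU :: "((real \<times> real) list \<Rightarrow> real) \<Rightarrow> nat \<Rightarrow> nat \<Rightarrow> (nat \<Rightarrow> nat) \<Rightarrow> (nat \<Rightarrow> nat) \<Rightarrow> real" where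
  "GU h m n x y = (\<Sum>I \<in> {I. I \<subseteq> {..<n} \<and> card I = m}.
        h (map (\<lambda>i. (real (x i), real (y i))) (sorted_list_of_set I))) / real (n choose m)"

lemma rank_of_rk: "i < n \<Longrightarrow> rank_of X n i s w = rk n (\<lambda>i. X i s w) i"
  unfolding rank_of_def rk_def by simp

lemma V_rep: "V_stat f g X n s t w = GV f g n (rk n (\<lambda>i. X i s w)) (rk n (\<lambda>i. X i t w))"
  unfolding V_stat_def GV_def by (simp add: rank_of_rk)

lemma U_rep:
  assumes rb: "rank_based_kernel m h"
  shows "U_stat h m X n s t w = GU h m n (rk n (\<lambda>i. X i s w)) (rk n (\<lambda>i. X i t w))"
proof -
  have hx: "h (map (\<lambda>i. (X i s w, X i t w)) (sorted_list_of_set I)) =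
        h (map (\<lambda>i. (real (rk n (\<lambda>i. X i s w) i), real (rk n (\<lambda>i. X i t w) i))) (sorted_list_of_set I))"
    if I: "I \<in> {I. I \<subseteq> {..<n} \<and> card I = m}" for I
  proof -
    define L where "L = sorted_list_of_set I"
    have fin: "finite I" using I finite_subset by auto
    have lenL: "length L = m" using I fin unfolding L_def by simp
    have Lin: "L ! j < n" if "j < m" for j
    proof -
      have "L ! j \<in> set L" using lenL that by simp
      then show ?thesis using I fin unfolding L_def by auto
    qed
    show ?thesis
      unfolding L_def[symmetric]
      using rb lenL Lin rk_le_iff[of _ n _ "\<lambda>i. X i s w"] rk_le_iff[of _ n _ "\<lambda>i. X i t w"]
      unfolding rank_based_kernel_def by simp
  qed
  have eq: "(\<Sum>I \<in> {I. I \<subseteq> {..<n} \<and> card I = m}. h (map (\<lambda>i. (X i s w, X i t w)) (sorted_list_of_set I)))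
    = (\<Sum>I \<in> {I. I \<subseteq> {..<n} \<and> card I = m}.
        h (map (\<lambda>i. (real (rk n (\<lambda>i. X i s w) i), real (rk n (\<lambda>i. X i t w) i))) (sorted_list_of_set I)))"
    by (rule sum.cong[OF refl]) (rule hx)
  show ?thesis unfolding U_stat_def GU_def eq ..
qed

lemma invG_GV: "invG n (GV f g n)"
  unfolding invG_def GV_def
proof (intro allI impI)
  fix \<tau> :: "nat \<Rightarrow> nat" and x y :: "nat \<Rightarrow> nat"
  assume t: "\<tau> permutes {..<n}"
  have "(\<Sum>i<n. f (real ((x \<circ> \<tau>) i) / real (n + 1)) * g (real ((y \<circ> \<tau>) i) / real (n + 1)))
      = (\<Sum>i<n. f (real (x i) / real (n + 1)) * g (real (y i) / real (n + 1)))"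
    using sum.permute[OF t, of "\<lambda>i. f (real (x i) / real (n + 1)) * g (real (y i) / real (n + 1))"]
    by (simp add: comp_def)
  then show "(\<Sum>i<n. f (real ((x \<circ> \<tau>) i) / real (n + 1)) * g (real ((y \<circ> \<tau>) i) / real (n + 1))) / real n =
       (\<Sum>i<n. f (real (x i) / real (n + 1)) * g (real (y i) / real (n + 1))) / real n" by simp
qed

lemma invG_GU:
  assumes sym: "symmetric_kernel m h"
  shows "invG n (GU h m n)"
  unfolding invG_def
proof (intro allI impI)
  fix \<tau> :: "nat \<Rightarrow> nat" and x y :: "nat \<Rightarrow> nat"
  assume t: "\<tau> permutes {..<n}"
  define pt where "pt i = (real (x i), real (y i))" for i
  define \<I> where "\<I> = {I. I \<subseteq> {..<n} \<and> card I = m}"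
  have injt: "inj \<tau>" using permutes_inj[OF t] .
  have eqt: "h (map (pt \<circ> \<tau>) (sorted_list_of_set I)) = h (map pt (sorted_list_of_set (\<tau> ` I)))"
    if I: "I \<in> \<I>" for I
  proof -
    have fin: "finite I" using I finite_subset unfolding \<I>_def by auto
    have d1: "distinct (map \<tau> (sorted_list_of_set I))"
      using injt by (simp add: distinct_map inj_on_subset[OF injt subset_UNIV])
    have d2: "distinct (sorted_list_of_set (\<tau> ` I))" by simp
    have "set (map \<tau> (sorted_list_of_set I)) = set (sorted_list_of_set (\<tau> ` I))"
      using fin by simp
    then have ms: "mset (map \<tau> (sorted_list_of_set I)) = mset (sorted_list_of_set (\<tau> ` I))"
      using set_eq_iff_mset_eq_distinct[OF d1 d2] by simp
    have len: "length (map pt (map \<tau> (sorted_list_of_set I))) = m"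
      using I fin unfolding \<I>_def by simp
    have "mset (map pt (map \<tau> (sorted_list_of_set I))) = mset (map pt (sorted_list_of_set (\<tau> ` I)))"
      using ms by (metis mset_map)
    then have "h (map pt (map \<tau> (sorted_list_of_set I))) = h (map pt (sorted_list_of_set (\<tau> ` I)))"
      using sym len unfolding symmetric_kernel_def by blast
    then show ?thesis by simp
  qed
  have reind: "(\<Sum>I\<in>\<I>. F (\<tau> ` I)) = (\<Sum>I\<in>\<I>. F I)" for F :: "nat set \<Rightarrow> real"
  proof (rule sum.reindex_bij_witness[of _ "\<lambda>I. inv \<tau> ` I" "\<lambda>I. \<tau> ` I"])
    have it: "inv \<tau> permutes {..<n}" using permutes_inv[OF t] .
    have injit: "inj (inv \<tau>)" using permutes_inj[OF it] .
    fix I assume I: "I \<in> \<I>"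
    show "inv \<tau> ` \<tau> ` I = I" using injt by (simp add: image_image inv_f_f)
    show "\<tau> ` I \<in> \<I>"
    proof -
      have "\<tau> ` I \<subseteq> {..<n}" using I permutes_lt[OF t] unfolding \<I>_def by auto
      moreover have "card (\<tau> ` I) = m" using I injt unfolding \<I>_def by (simp add: card_image inj_on_subset)
      ultimately show ?thesis unfolding \<I>_def by simp
    qed
    show "\<tau> ` inv \<tau> ` I = I" using permutes_surj[OF t] by (simp add: image_image surj_f_inv_f)
    show "inv \<tau> ` I \<in> \<I>"
    proof -
      have "inv \<tau> ` I \<subseteq> {..<n}" using I permutes_lt[OF it] unfolding \<I>_def by auto
      moreover have "card (inv \<tau> ` I) = m" using I injit unfolding \<I>_def by (simp add: card_image inj_on_subset)
      ultimately show ?thesis unfolding \<I>_def by simp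
    qed
    show "F (\<tau> ` I) = F (\<tau> ` I)" ..
  qed
  have "(\<Sum>I\<in>\<I>. h (map (pt \<circ> \<tau>) (sorted_list_of_set I))) = (\<Sum>I\<in>\<I>. h (map pt (sorted_list_of_set (\<tau> ` I))))"
    using eqt by (rule sum.cong[OF refl])
  also have "\<dots> = (\<Sum>I\<in>\<I>. h (map pt (sorted_list_of_set I)))"
    by (rule reind)
  finally have "(\<Sum>I\<in>\<I>. h (map (pt \<circ> \<tau>) (sorted_list_of_set I))) = (\<Sum>I\<in>\<I>. h (map pt (sorted_list_of_set I)))" .
  then show "GU h m n (x \<circ> \<tau>) (y \<circ> \<tau>) = GU h m n x y"
    unfolding GU_def \<I>_def[symmetric] pt_def by (simp add: comp_def)
qed

lemma rk_cong: "(\<And>i. i < n \<Longrightarrow> x i = y i) \<Longrightarrow> rk n x = rk n y"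
proof
  fix i assume h: "\<And>i. i < n \<Longrightarrow> x i = y i"
  show "rk n x i = rk n y i"
  proof (cases "i < n")
    case True
    have "{j \<in> {..<n}. x j \<le> x i} = {j \<in> {..<n}. y j \<le> y i}" using h True by auto
    then show ?thesis unfolding rk_def by simp
  qed (simp add: rk_def)
qed

lemma card_filter_sum: "finite A \<Longrightarrow> real (card {j \<in> A. P j}) = (\<Sum>j\<in>A. if P j then 1 else 0)"
  by (simp only: real_of_card sum.inter_filter)

lemma meas_rk:
  assumes Y: "\<And>i. i < n \<Longrightarrow> Y i \<in> borel_measurable N"
  shows "(\<lambda>w. rk n (\<lambda>i. Y i w)) \<in> measurable N (count_space (Fn n))"
proof -
  define Y' where "Y' i = (if i < n then Y i else (\<lambda>_. 0))" for i
  have Y'm[measurable]: "Y' i \<in> borel_measurable N" for i using Y unfolding Y'_def by auto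
  have eq: "rk n (\<lambda>i. Y i w) = rk n (\<lambda>i. Y' i w)" for w by (rule rk_cong) (simp add: Y'_def)
  have pre: "(\<lambda>w. rk n (\<lambda>i. Y i w)) -` {a} \<inter> space N \<in> sets N" if a: "a \<in> Fn n" for a
  proof -
    have "(\<lambda>w. rk n (\<lambda>i. Y i w)) -` {a} \<inter> space N =
      {w \<in> space N. \<forall>i\<in>{..<n}. (\<Sum>j\<in>{..<n}. if Y' j w \<le> Y' i w then 1 else 0) = (real (a i) :: real)}"
    proof (intro set_eqI iffI)
      fix w assume "w \<in> (\<lambda>w. rk n (\<lambda>i. Y i w)) -` {a} \<inter> space N"
      then have w: "w \<in> space N" "rk n (\<lambda>i. Y' i w) = a" using eq by auto
      show "w \<in> {w \<in> space N. \<forall>i\<in>{..<n}. (\<Sum>j\<in>{..<n}. if Y' j w \<le> Y' i w then 1 else 0) = (real (a i) :: real)}"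
      proof (intro CollectI conjI ballI)
        fix i assume i: "i \<in> {..<n}"
        have "a i = card {j \<in> {..<n}. Y' j w \<le> Y' i w}" using w(2)[symmetric] i unfolding rk_def by simp
        then show "(\<Sum>j\<in>{..<n}. if Y' j w \<le> Y' i w then 1 else 0) = (real (a i) :: real)"
          using card_filter_sum[of "{..<n}" "\<lambda>j. Y' j w \<le> Y' i w"] by simp
      qed (use w in auto)
    next
      fix w assume "w \<in> {w \<in> space N. \<forall>i\<in>{..<n}. (\<Sum>j\<in>{..<n}. if Y' j w \<le> Y' i w then 1 else 0) = (real (a i) :: real)}"
      then have w: "w \<in> space N" "\<And>i. i < n \<Longrightarrow> (\<Sum>j\<in>{..<n}. if Y' j w \<le> Y' i w then 1 else 0) = (real (a i) :: real)" by auto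
      have "rk n (\<lambda>i. Y' i w) = a"
      proof
        fix i show "rk n (\<lambda>i. Y' i w) i = a i"
        proof (cases "i < n")
          case True
          then have "real (card {j \<in> {..<n}. Y' j w \<le> Y' i w}) = real (a i)"
            using w(2)[OF True] card_filter_sum[of "{..<n}" "\<lambda>j. Y' j w \<le> Y' i w"] by simp
          then show ?thesis using True unfolding rk_def by simp
        next
          case False
          then show ?thesis using a unfolding rk_def Fn_def by simp
        qed
      qed
      then show "w \<in> (\<lambda>w. rk n (\<lambda>i. Y i w)) -` {a} \<inter> space N" using w(1) eq by simp
    qed
    also have "\<dots> \<in> sets N"
    proof -
      have [measurable]: "(\<lambda>w. (\<Sum>j\<in>{..<n}. if Y' j w \<le> Y' i w then 1 else 0) :: real) \<in> borel_measurable N" for i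
        by (intro borel_measurable_sum measurable_If_set) auto
      show ?thesis by (intro sets.sets_Collect_finite_All) auto
    qed
    finally show ?thesis .
  qed
  show ?thesis
    unfolding measurable_count_space_eq2[OF finite_Fn]
    using pre rk_in_Fn by auto
qed

lemma (in prob_space) indep_sets_reindex:
  assumes ind: "indep_sets F (f ` I)" and inj: "inj_on f I"
  shows "indep_sets (\<lambda>i. F (f i)) I"
  unfolding indep_sets_def
proof (intro conjI ballI allI impI)
  fix i assume "i \<in> I" then show "F (f i) \<subseteq> events" using ind unfolding indep_sets_def by auto
next
  fix J A assume J: "J \<subseteq> I" "J \<noteq> {}" "finite J" and A: "A \<in> Pi J (\<lambda>i. F (f i))"
  define A' where "A' k = A (the_inv_into I f k)" for k
  have A'f: "A' (f j) = A j" if "j \<in> J" for j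
    unfolding A'_def using the_inv_into_f_f[OF inj] J that by auto
  have "A' \<in> Pi (f ` J) F" using A A'f by auto
  then have "prob (\<Inter>k\<in>f ` J. A' k) = (\<Prod>k\<in>f ` J. prob (A' k))"
    using J by (intro indep_setsD[OF ind]) auto
  moreover have "(\<Inter>k\<in>f ` J. A' k) = (\<Inter>j\<in>J. A j)" using A'f by auto
  moreover have "(\<Prod>k\<in>f ` J. prob (A' k)) = (\<Prod>j\<in>J. prob (A j))"
    using prod.reindex[of f J "\<lambda>k. prob (A' k)"] inj_on_subset[OF inj J(1)] A'f by simp
  ultimately show "prob (\<Inter>j\<in>J. A j) = (\<Prod>j\<in>J. prob (A j))" by simp
qed

lemma (in prob_space) indep_vars_reindex:
  assumes ind: "indep_vars M' X (f ` I)" and inj: "inj_on f I"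
  shows "indep_vars (\<lambda>i. M' (f i)) (\<lambda>i. X (f i)) I"
proof -
  define F where "F k = sigma_sets (space M) {X k -` A \<inter> space M |A. A \<in> sets (M' k)}" for k
  have rv: "\<forall>i\<in>I. random_variable (M' (f i)) (X (f i))" using ind unfolding indep_vars_def by auto
  have "indep_sets F (f ` I)" using ind unfolding indep_vars_def F_def by auto
  then have "indep_sets (\<lambda>i. F (f i)) I" using inj by (rule indep_sets_reindex)
  then show ?thesis using rv unfolding indep_vars_def F_def by simp
qed

lemma ties_null:
  fixes \<nu> :: "real measure" and n i j :: nat
  assumes P: "prob_space \<nu>" and S: "sets \<nu> = sets borel" and at: "\<And>x. emeasure \<nu> {x} = 0"
    and ij: "i < n" "j < n" "i \<noteq> j"
  shows "emeasure (PiM {..<n} (\<lambda>_. \<nu>)) {\<omega> \<in> space (PiM {..<n} (\<lambda>_. \<nu>)). \<omega> i = \<omega> j} = 0"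
proof -
  define PP where "PP = PiM {..<n} (\<lambda>_. \<nu>)"
  define B where "B = PiM (UNIV :: bool set) (\<lambda>_. \<nu>)"
  define f where "f b = (if b then i else j)" for b :: bool
  define R where "R \<omega> = (\<lambda>b\<in>UNIV. \<omega> (f b))" for \<omega> :: "nat \<Rightarrow> real"
  define Q where "Q x = (x True, x False)" for x :: "bool \<Rightarrow> real"
  interpret \<nu>: prob_space \<nu> by (rule P)
  have sp: "space \<nu> = UNIV" using sets_eq_imp_space_eq[OF S] by simp
  have injf: "inj_on f UNIV" using ij unfolding f_def inj_on_def by auto
  have fI: "f \<in> UNIV \<rightarrow> {..<n}" using ij unfolding f_def by auto
  have 1: "distr PP B R = B"
    unfolding PP_def B_def R_def using distr_PiM_reindex[of "{..<n}" "\<lambda>_. \<nu>" f UNIV] P injf fI by simp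
  have cb: "case_bool \<nu> \<nu> = (\<lambda>_. \<nu>)" by (rule ext) (simp split: bool.split)
  have 2: "\<nu> \<Otimes>\<^sub>M \<nu> = distr B (\<nu> \<Otimes>\<^sub>M \<nu>) Q"
    using pair_measure_eq_distr_PiM[of \<nu> \<nu>] \<nu>.sigma_finite_measure_axioms
    unfolding B_def Q_def cb by simp
  have Rm: "R \<in> measurable PP B"
    unfolding R_def PP_def B_def
    by (rule measurable_restrict) (use fI in \<open>auto intro!: measurable_component_singleton\<close>)
  have Qm: "Q \<in> measurable B (\<nu> \<Otimes>\<^sub>M \<nu>)"
    unfolding Q_def B_def by (intro measurable_Pair measurable_component_singleton) auto
  have 3: "distr PP (\<nu> \<Otimes>\<^sub>M \<nu>) (\<lambda>\<omega>. (\<omega> i, \<omega> j)) = \<nu> \<Otimes>\<^sub>M \<nu>"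
  proof -
    have "distr PP (\<nu> \<Otimes>\<^sub>M \<nu>) (\<lambda>\<omega>. (\<omega> i, \<omega> j)) = distr PP (\<nu> \<Otimes>\<^sub>M \<nu>) (Q \<circ> R)"
      by (rule distr_cong) (auto simp: Q_def R_def f_def)
    also have "\<dots> = distr (distr PP B R) (\<nu> \<Otimes>\<^sub>M \<nu>) Q"
      by (rule distr_distr[symmetric, OF Qm Rm])
    also have "\<dots> = \<nu> \<Otimes>\<^sub>M \<nu>" using 1 2 by simp
    finally show ?thesis .
  qed
  define D where "D = {z \<in> space (\<nu> \<Otimes>\<^sub>M \<nu>). fst z = snd z}"
  have SS: "sets (\<nu> \<Otimes>\<^sub>M \<nu>) = sets (borel \<Otimes>\<^sub>M borel)" by (rule sets_pair_measure_cong) (use S in auto)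
  have spp: "space (\<nu> \<Otimes>\<^sub>M \<nu>) = UNIV" by (simp add: space_pair_measure sp)
  have Dm: "D \<in> sets (\<nu> \<Otimes>\<^sub>M \<nu>)"
  proof -
    have "{z \<in> space (borel \<Otimes>\<^sub>M borel). fst z = (snd z :: real)} \<in> sets (borel \<Otimes>\<^sub>M borel)"
      by measurable
    moreover have "space (borel \<Otimes>\<^sub>M borel :: (real \<times> real) measure) = UNIV" by (simp add: space_pair_measure)
    ultimately show ?thesis unfolding D_def SS spp by simp
  qed
  have 5: "emeasure (\<nu> \<Otimes>\<^sub>M \<nu>) D = 0"
  proof -
    have "emeasure (\<nu> \<Otimes>\<^sub>M \<nu>) D = (\<integral>\<^sup>+x. emeasure \<nu> (Pair x -` D) \<partial>\<nu>)"
      using \<nu>.emeasure_pair_measure_alt[OF Dm] .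
    also have "\<dots> = (\<integral>\<^sup>+x. 0 \<partial>\<nu>)"
    proof (rule nn_integral_cong)
      fix x have "Pair x -` D = {x}" unfolding D_def spp by auto
      then show "emeasure \<nu> (Pair x -` D) = 0" using at by simp
    qed
    finally show ?thesis by simp
  qed
  have Pm: "(\<lambda>\<omega>. (\<omega> i, \<omega> j)) \<in> measurable PP (\<nu> \<Otimes>\<^sub>M \<nu>)"
    unfolding PP_def using ij by (intro measurable_Pair measurable_component_singleton) auto
  have "emeasure PP {\<omega> \<in> space PP. \<omega> i = \<omega> j} = emeasure PP ((\<lambda>\<omega>. (\<omega> i, \<omega> j)) -` D \<inter> space PP)"
    unfolding D_def spp by (intro arg_cong[where f="emeasure PP"]) auto
  also have "\<dots> = emeasure (distr PP (\<nu> \<Otimes>\<^sub>M \<nu>) (\<lambda>\<omega>. (\<omega> i, \<omega> j))) D"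
    by (rule emeasure_distr[symmetric, OF Pm Dm])
  also have "\<dots> = 0" using 3 5 by simp
  finally show ?thesis unfolding PP_def .
qed

lemma a0_Pm: "(\<lambda>i. if i < n then i + 1 else 0) \<in> Pm n"
proof -
  have "bij_betw (\<lambda>i. i + 1) {..<n} {1..n}"
    by (rule bij_betw_byWitness[of _ "\<lambda>i. i - 1"]) auto
  then have "bij_betw (\<lambda>i. if i < n then i + 1 else 0) {..<n} {1..n}"
    by (rule bij_betw_cong[THEN iffD1, rotated]) auto
  then show ?thesis unfolding Pm_def Fn_def by auto
qed

lemma rank_law:
  fixes \<nu> :: "real measure" and n :: nat
  assumes P: "prob_space \<nu>" and S: "sets \<nu> = sets borel" and at: "\<And>x. emeasure \<nu> {x} = 0"
  shows "measure (PiM {..<n} (\<lambda>_. \<nu>)) {\<omega> \<in> space (PiM {..<n} (\<lambda>_. \<nu>)). rk n \<omega> = a} = wt n a"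
proof -
  define PP where "PP = PiM {..<n} (\<lambda>_. \<nu>)"
  interpret PP: prob_space PP unfolding PP_def by (rule prob_space_PiM) (use P in auto)
  define Q where "Q a = measure PP {\<omega> \<in> space PP. rk n \<omega> = a}" for a
  have comp: "(\<lambda>\<omega>. \<omega> i) \<in> borel_measurable PP" if "i < n" for i
  proof -
    have "(\<lambda>\<omega>. \<omega> i) \<in> measurable PP \<nu>" unfolding PP_def using that by (intro measurable_component_singleton) auto
    then show ?thesis using measurable_cong_sets[OF refl S] by blast
  qed
  have rkm: "(\<lambda>\<omega>. rk n (\<lambda>i. \<omega> i)) \<in> measurable PP (count_space (Fn n))"
    by (rule meas_rk) (rule comp)
  have Sa: "{\<omega> \<in> space PP. rk n \<omega> = a} \<in> sets PP" for a
  proof (cases "a \<in> Fn n")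
    case True
    have "(\<lambda>\<omega>. rk n (\<lambda>i. \<omega> i)) -` {a} \<inter> space PP \<in> sets PP"
      by (rule measurable_sets[OF rkm]) (use True in auto)
    moreover have "(\<lambda>\<omega>. rk n (\<lambda>i. \<omega> i)) -` {a} \<inter> space PP = {\<omega> \<in> space PP. rk n \<omega> = a}" by auto
    ultimately show ?thesis by simp
  next
    case False
    then have e: "{\<omega> \<in> space PP. rk n \<omega> = a} = {}" using rk_in_Fn by auto
    show ?thesis unfolding e by (rule sets.empty_sets)
  qed
  have AEinj: "AE \<omega> in PP. inj_on \<omega> {..<n}"
  proof -
    have "AE \<omega> in PP. \<forall>ij\<in>{..<n} \<times> {..<n}. fst ij \<noteq> snd ij \<longrightarrow> \<omega> (fst ij) \<noteq> \<omega> (snd ij)"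
    proof (rule AE_finite_allI)
      fix ij assume ij: "ij \<in> {..<n} \<times> {..<n}"
      show "AE \<omega> in PP. fst ij \<noteq> snd ij \<longrightarrow> \<omega> (fst ij) \<noteq> \<omega> (snd ij)"
      proof (cases "fst ij = snd ij")
        case False
        have N: "{\<omega> \<in> space PP. \<omega> (fst ij) = \<omega> (snd ij)} \<in> sets PP"
          using comp ij by (intro measurable_equality_set) auto
        have "emeasure PP {\<omega> \<in> space PP. \<omega> (fst ij) = \<omega> (snd ij)} = 0"
          unfolding PP_def using ties_null[OF P S at, of "fst ij" n "snd ij"] ij False by auto
        then have "{\<omega> \<in> space PP. \<omega> (fst ij) = \<omega> (snd ij)} \<in> null_sets PP" using N by auto
        then show ?thesis by (rule AE_I') auto
      qed simp
    qed simp
    then show ?thesis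
      by (rule eventually_mono) (auto simp: inj_on_def)
  qed
  have Q0: "Q a = 0" if "a \<notin> Pm n" for a
  proof -
    have "AE \<omega> in PP. \<not> rk n \<omega> = a" using AEinj by (rule eventually_mono) (use rk_Pm that in blast)
    moreover have e: "{\<omega> \<in> space PP. rk n \<omega> = a} \<in> sets PP" by (rule Sa)
    ultimately show ?thesis unfolding Q_def using PP.prob_Collect_eq_0[OF e] by simp
  qed
  have Qperm: "Q (a \<circ> \<tau>) = Q a" if t: "\<tau> permutes {..<n}" for a \<tau>
  proof -
    define T where "T \<omega> = (\<lambda>i\<in>{..<n}. \<omega> (\<tau> i))" for \<omega> :: "nat \<Rightarrow> real"
    have injt: "inj_on \<tau> {..<n}" using inj_on_subset[OF permutes_inj[OF t] subset_UNIV] .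
    have tI: "\<tau> \<in> {..<n} \<rightarrow> {..<n}" using permutes_lt[OF t] by auto
    have D: "distr PP PP T = PP"
      unfolding PP_def T_def using distr_PiM_reindex[of "{..<n}" "\<lambda>_. \<nu>" \<tau> "{..<n}"] P injt tI by simp
    have Tm: "T \<in> measurable PP PP"
      unfolding T_def PP_def
      by (rule measurable_restrict) (use tI in \<open>auto intro!: measurable_component_singleton\<close>)
    have rkT: "rk n (T \<omega>) = rk n \<omega> \<circ> \<tau>" for \<omega>
    proof -
      have "rk n (T \<omega>) = rk n (\<omega> \<circ> \<tau>)" by (rule rk_cong) (simp add: T_def)
      then show ?thesis using rk_perm[OF t] by simp
    qed
    have canc: "(f \<circ> \<tau> = g \<circ> \<tau>) \<longleftrightarrow> f = g" for f g :: "nat \<Rightarrow> nat"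
    proof
      assume "f \<circ> \<tau> = g \<circ> \<tau>"
      then have "f \<circ> \<tau> \<circ> inv \<tau> = g \<circ> \<tau> \<circ> inv \<tau>" by simp
      then show "f = g" using permutes_inv_o(1)[OF t] by (simp add: comp_assoc)
    qed simp
    have "{\<omega> \<in> space PP. rk n \<omega> = a} = T -` {\<omega> \<in> space PP. rk n \<omega> = a \<circ> \<tau>} \<inter> space PP"
      using measurable_space[OF Tm] rkT canc by auto
    then have "Q a = measure PP (T -` {\<omega> \<in> space PP. rk n \<omega> = a \<circ> \<tau>} \<inter> space PP)"
      unfolding Q_def by simp
    also have "\<dots> = measure (distr PP PP T) {\<omega> \<in> space PP. rk n \<omega> = a \<circ> \<tau>}"
      by (rule measure_distr[symmetric, OF Tm Sa])
    also have "\<dots> = Q (a \<circ> \<tau>)" unfolding D Q_def ..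
    finally show ?thesis by simp
  qed
  define a0 :: "nat \<Rightarrow> nat" where "a0 = (\<lambda>i. if i < n then i + 1 else 0)"
  have a0: "a0 \<in> Pm n" unfolding a0_def by (rule a0_Pm)
  have Qc: "Q a = Q a0" if "a \<in> Pm n" for a
    using Pm_trans[OF a0 that] Qperm by auto
  have sum1: "(\<Sum>a\<in>Pm n. Q a) = 1"
  proof -
    have "(\<Sum>a\<in>Pm n. Q a) = measure PP (\<Union>a\<in>Pm n. {\<omega> \<in> space PP. rk n \<omega> = a})"
      unfolding Q_def using Sa finite_Pm
      by (intro PP.finite_measure_finite_Union[symmetric]) (auto simp: disjoint_family_on_def)
    also have "(\<Union>a\<in>Pm n. {\<omega> \<in> space PP. rk n \<omega> = a}) = {\<omega> \<in> space PP. rk n \<omega> \<in> Pm n}" by auto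
    also have "measure PP {\<omega> \<in> space PP. rk n \<omega> \<in> Pm n} = 1"
    proof -
      have "{\<omega> \<in> space PP. rk n \<omega> \<in> Pm n} = (\<Union>a\<in>Pm n. {\<omega> \<in> space PP. rk n \<omega> = a})" by auto
      also have "\<dots> \<in> sets PP" using Sa finite_Pm by auto
      finally have m: "{\<omega> \<in> space PP. rk n \<omega> \<in> Pm n} \<in> sets PP" .
      have "AE \<omega> in PP. rk n \<omega> \<in> Pm n" using AEinj by (rule eventually_mono) (use rk_Pm in blast)
      then show ?thesis using PP.prob_Collect_eq_1[OF m] by simp
    qed
    finally show ?thesis .
  qed
  then have "real (card (Pm n)) * Q a0 = 1" using Qc by simp
  moreover have "card (Pm n) \<noteq> 0" using a0 finite_Pm[of n] card_0_eq[of "Pm n"] by blast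
  ultimately have Qa0: "Q a0 = 1 / real (card (Pm n))" by (simp add: field_simps)
  show ?thesis
    using Q0 Qc Qa0 unfolding wt_def Q_def[symmetric] PP_def[symmetric] by auto
qed

lemma (in prob_space) E_fin:
  assumes V: "finite V" and R: "\<And>w. w \<in> space M \<Longrightarrow> R w \<in> V"
    and ev: "\<And>v. v \<in> V \<Longrightarrow> {w \<in> space M. R w = v} \<in> events"
  shows "integrable M (\<lambda>w. \<Phi> (R w) :: real)"
    and "(\<integral>w. \<Phi> (R w) \<partial>M) = (\<Sum>v\<in>V. \<Phi> v * prob {w \<in> space M. R w = v})"
proof -
  have eq: "\<Phi> (R w) = (\<Sum>v\<in>V. \<Phi> v * indicator {w \<in> space M. R w = v} w)" if w: "w \<in> space M" for w
  proof -
    have "(\<Sum>v\<in>V. \<Phi> v * indicator {w \<in> space M. R w = v} w) = (\<Sum>v\<in>V. if v = R w then \<Phi> v else 0)"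
      by (rule sum.cong) (auto simp: indicator_def w)
    also have "\<dots> = \<Phi> (R w)" using R[OF w] V by (simp add: sum.delta)
    finally show ?thesis by simp
  qed
  have int: "integrable M (\<lambda>w. \<Sum>v\<in>V. \<Phi> v * indicator {w \<in> space M. R w = v} w)"
    using ev by (intro Bochner_Integration.integrable_sum integrable_mult_right integrable_real_indicator) (auto simp: emeasure_eq_measure)
  have "integrable M (\<lambda>w. \<Phi> (R w)) \<longleftrightarrow> integrable M (\<lambda>w. \<Sum>v\<in>V. \<Phi> v * indicator {w \<in> space M. R w = v} w)"
    by (rule Bochner_Integration.integrable_cong) (simp_all add: eq)
  then show "integrable M (\<lambda>w. \<Phi> (R w))" using int by simp
  have "(\<integral>w. \<Phi> (R w) \<partial>M) = (\<integral>w. (\<Sum>v\<in>V. \<Phi> v * indicator {w \<in> space M. R w = v} w) \<partial>M)"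
    by (rule Bochner_Integration.integral_cong) (simp_all add: eq)
  also have "\<dots> = (\<Sum>v\<in>V. (\<integral>w. \<Phi> v * indicator {w \<in> space M. R w = v} w \<partial>M))"
    using ev by (intro Bochner_Integration.integral_sum integrable_mult_right integrable_real_indicator) (auto simp: emeasure_eq_measure)
  also have "\<dots> = (\<Sum>v\<in>V. \<Phi> v * prob {w \<in> space M. R w = v})"
    by (rule sum.cong) (auto simp: Int_absorb2)
  finally show "(\<integral>w. \<Phi> (R w) \<partial>M) = (\<Sum>v\<in>V. \<Phi> v * prob {w \<in> space M. R w = v})" .
qed

lemma E2_diff: "E2 n G (\<lambda>z. f z - g z) = E2 n G f - E2 n G g"
  unfolding E2_def by (simp add: sum_subtractf left_diff_distrib)

lemma E2_add: "E2 n G (\<lambda>z. f z + g z) = E2 n G f + E2 n G g"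
  unfolding E2_def by (simp add: sum.distrib distrib_right)

lemma E2_cmult: "E2 n G (\<lambda>z. c * f z) = c * E2 n G f"
  unfolding E2_def by (simp add: sum_distrib_left mult.assoc)

lemma E2_const: "E2 n G (\<lambda>z. c) = c"
proof -
  have "E2 n G (\<lambda>z. c) = (\<Sum>a\<in>Fn n. \<Sum>b\<in>Fn n. c * wt n a * wt n b)" unfolding E2_def ..
  also have "\<dots> = (\<Sum>a\<in>Fn n. \<Sum>b\<in>Fn n. c * (wt n a * wt n b))"
    by (simp only: mult.assoc)
  also have "\<dots> = c * (\<Sum>a\<in>Fn n. \<Sum>b\<in>Fn n. wt n a * wt n b)"
    by (simp only: sum_distrib_left)
  also have "\<dots> = c * ((\<Sum>a\<in>Fn n. wt n a) * (\<Sum>b\<in>Fn n. wt n b))"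
    by (simp only: sum_product)
  also have "\<dots> = c" by (simp add: sum_wt)
  finally show ?thesis .
qed

lemma finite_pairs: "finite (pairs p)"
proof -
  have "pairs p \<subseteq> {..<p} \<times> {..<p}" unfolding pairs_def by auto
  then show ?thesis by (rule finite_subset) auto
qed

lemma card_pairs: "card (pairs p) = p choose 2"
proof (induction p)
  case 0
  have "pairs 0 = {}" unfolding pairs_def by auto
  then show ?case by simp
next
  case (Suc p)
  have e: "pairs (Suc p) = pairs p \<union> (\<lambda>s. (s, p)) ` {..<p}" unfolding pairs_def by auto
  have d: "pairs p \<inter> (\<lambda>s. (s, p)) ` {..<p} = {}" unfolding pairs_def by auto
  have "card (pairs (Suc p)) = card (pairs p) + card ((\<lambda>s. (s, p)) ` {..<p})"
    unfolding e by (rule card_Un_disjoint) (use finite_pairs d in auto)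
  also have "card ((\<lambda>s. (s, p)) ` {..<p}) = p" by (subst card_image) (auto simp: inj_on_def)
  finally have c: "card (pairs (Suc p)) = card (pairs p) + p" .
  have "Suc p choose 2 = (p choose 2) + p"
    using binomial_Suc_Suc[of p 1] by (simp add: numeral_2_eq_2)
  then show ?case using Suc.IH c by simp
qed

locale rkset = prob_space M for M :: "'a measure" +
  fixes X :: "nat \<Rightarrow> nat \<Rightarrow> 'a \<Rightarrow> real" and n p :: nat
  assumes n1: "1 \<le> n"
  and meas: "\<forall>i<n. \<forall>s<p. X i s \<in> borel_measurable M"
  and ind: "indep_vars (\<lambda>_. borel) (\<lambda>(i, s). X i s) ({..<n} \<times> {..<p})"
  and ident: "\<forall>i<n. \<forall>s<p. distr M borel (X i s) = distr M borel (X 0 s)"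
  and cont: "\<forall>s<p. \<forall>x. measure M {w \<in> space M. X 0 s w = x} = 0"
begin

definition Rk :: "nat \<Rightarrow> 'a \<Rightarrow> nat \<Rightarrow> nat" where
  "Rk s w = rk n (\<lambda>i. X i s w)"

lemma Rk_meas: "s < p \<Longrightarrow> Rk s \<in> measurable M (count_space (Fn n))"
  unfolding Rk_def[abs_def] using meas by (intro meas_rk) auto

lemma Rk_indep: "indep_vars (\<lambda>_. count_space (Fn n)) Rk {..<p}"
proof -
  define K where "K s = {..<n} \<times> {s}" for s :: nat
  have "indep_vars (\<lambda>s. PiM (K s) (\<lambda>_. borel)) (\<lambda>s \<omega>. restrict (\<lambda>k. (\<lambda>(i, s). X i s) k \<omega>) (K s)) {..<p}"
    by (rule indep_vars_restrict[OF ind]) (auto simp: K_def disjoint_family_on_def)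
  then have "indep_vars (\<lambda>_. count_space (Fn n))
      (\<lambda>s \<omega>. (\<lambda>x. rk n (\<lambda>i. x (i, s))) (restrict (\<lambda>k. (\<lambda>(i, s). X i s) k \<omega>) (K s))) {..<p}"
  proof (rule indep_vars_compose2)
    fix s assume "s \<in> {..<p}"
    show "(\<lambda>x. rk n (\<lambda>i. x (i, s))) \<in> measurable (PiM (K s) (\<lambda>_. borel)) (count_space (Fn n))"
      by (rule meas_rk) (simp add: K_def)
  qed
  then show ?thesis
  proof (rule indep_vars_cong[THEN iffD1, rotated -1])
    fix s assume "s \<in> {..<p}"
    show "(\<lambda>\<omega>. (\<lambda>x. rk n (\<lambda>i. x (i, s))) (restrict (\<lambda>k. (\<lambda>(i, s). X i s) k \<omega>) (K s))) = Rk s"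
      unfolding Rk_def by (rule ext, rule rk_cong) (simp add: K_def)
  qed simp_all
qed

lemma col_distr:
  assumes s: "s < p"
  shows "distr M (PiM {..<n} (\<lambda>_. borel)) (\<lambda>w. \<lambda>i\<in>{..<n}. X i s w) = PiM {..<n} (\<lambda>_. distr M borel (X 0 s))"
proof -
  define Xc where "Xc i = (if i < n then X i s else (\<lambda>_. 0))" for i
  have "indep_vars (\<lambda>_. borel) (\<lambda>(i, s). X i s) ((\<lambda>i. (i, s)) ` {..<n})"
    using s by (intro indep_vars_subset[OF ind]) auto
  then have "indep_vars (\<lambda>i. (\<lambda>_. borel) (i, s)) (\<lambda>i. (\<lambda>(i, s). X i s) (i, s)) {..<n}"
    by (rule indep_vars_reindex) (auto simp: inj_on_def)
  then have "indep_vars (\<lambda>_. borel) Xc {..<n}"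
    by (rule indep_vars_cong[THEN iffD1, rotated -1]) (auto simp: Xc_def)
  moreover have rv: "random_variable borel (Xc i)" for i using meas s by (auto simp: Xc_def)
  moreover have "{..<n} \<noteq> {}" using n1 lessThan_empty_iff[of n] by simp
  ultimately have "distr M (PiM {..<n} (\<lambda>_. borel)) (\<lambda>x. \<lambda>i\<in>{..<n}. Xc i x) = PiM {..<n} (\<lambda>i. distr M borel (Xc i))"
    using indep_vars_iff_distr_eq_PiM[where I="{..<n}" and M'="\<lambda>_. borel" and X=Xc] by simp
  moreover have "(\<lambda>x. \<lambda>i\<in>{..<n}. Xc i x) = (\<lambda>w. \<lambda>i\<in>{..<n}. X i s w)"
    by (rule ext, rule restrict_ext) (simp add: Xc_def)
  moreover have "PiM {..<n} (\<lambda>i. distr M borel (Xc i)) = PiM {..<n} (\<lambda>_. distr M borel (X 0 s))"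
  proof (intro PiM_cong refl)
    fix i assume i: "i \<in> {..<n}"
    then have "Xc i = X i s" by (simp add: Xc_def)
    moreover have "distr M borel (X i s) = distr M borel (X 0 s)" using ident s i by blast
    ultimately show "distr M borel (Xc i) = distr M borel (X 0 s)" by simp
  qed
  ultimately show ?thesis by simp
qed

lemma Rk_Fn: "Rk s w \<in> Fn n" unfolding Rk_def by (rule rk_in_Fn)

lemma Rk_ev: "s < p \<Longrightarrow> {w \<in> space M. Rk s w = a} \<in> events"
proof (cases "a \<in> Fn n")
  case True
  assume s: "s < p"
  have "Rk s -` {a} \<inter> space M \<in> events"
    by (rule measurable_sets[OF Rk_meas[OF s]]) (use True in auto)
  moreover have "Rk s -` {a} \<inter> space M = {w \<in> space M. Rk s w = a}" by auto
  ultimately show ?thesis by simp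
next
  case False
  then have e: "{w \<in> space M. Rk s w = a} = {}" using Rk_Fn by auto
  show ?thesis unfolding e by (rule sets.empty_sets)
qed

lemma Rk_law:
  assumes s: "s < p"
  shows "prob {w \<in> space M. Rk s w = a} = wt n a"
proof (cases "a \<in> Fn n")
  case False
  then have e: "{w \<in> space M. Rk s w = a} = {}" using Rk_Fn by auto
  have "a \<notin> Pm n" using False Pm_sub by auto
  then show ?thesis unfolding e wt_def by simp
next
  case True
  define \<nu> where "\<nu> = distr M borel (X 0 s)"
  define col where "col w = (\<lambda>i\<in>{..<n}. X i s w)" for w
  have X0: "X 0 s \<in> borel_measurable M" using meas s n1 by auto
  have P: "prob_space \<nu>" unfolding \<nu>_def by (rule prob_space_distr[OF X0])
  have S: "sets \<nu> = sets borel" unfolding \<nu>_def by simp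
  have at: "emeasure \<nu> {x} = 0" for x
  proof -
    have "emeasure \<nu> {x} = emeasure M (X 0 s -` {x} \<inter> space M)"
      unfolding \<nu>_def by (rule emeasure_distr[OF X0]) simp
    also have "X 0 s -` {x} \<inter> space M = {w \<in> space M. X 0 s w = x}" by auto
    also have "emeasure M {w \<in> space M. X 0 s w = x} = ennreal (measure M {w \<in> space M. X 0 s w = x})"
      by (rule emeasure_eq_measure)
    also have "measure M {w \<in> space M. X 0 s w = x} = 0" using cont s by blast
    finally show ?thesis by simp
  qed
  have L: "measure (PiM {..<n} (\<lambda>_. \<nu>)) {\<omega> \<in> space (PiM {..<n} (\<lambda>_. \<nu>)). rk n \<omega> = a} = wt n a"
    by (rule rank_law[OF P S at])
  have D: "distr M (PiM {..<n} (\<lambda>_. borel)) col = PiM {..<n} (\<lambda>_. \<nu>)"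
    unfolding col_def \<nu>_def by (rule col_distr[OF s])
  have colm: "col \<in> measurable M (PiM {..<n} (\<lambda>_. borel))"
    unfolding col_def using meas s by (intro measurable_restrict) auto
  have sp: "space (PiM {..<n} (\<lambda>_. \<nu>)) = space (PiM {..<n} (\<lambda>_. borel :: real measure))"
    using sets_eq_imp_space_eq[OF S] by (simp add: space_PiM)
  define Sa where "Sa = {\<omega> \<in> space (PiM {..<n} (\<lambda>_. borel :: real measure)). rk n \<omega> = a}"
  have Sam: "Sa \<in> sets (PiM {..<n} (\<lambda>_. borel))"
  proof -
    have rkm: "(\<lambda>\<omega>. rk n (\<lambda>i. \<omega> i)) \<in> measurable (PiM {..<n} (\<lambda>_. borel)) (count_space (Fn n))"
      by (rule meas_rk) (auto intro!: measurable_component_singleton)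
    have "(\<lambda>\<omega>. rk n (\<lambda>i. \<omega> i)) -` {a} \<inter> space (PiM {..<n} (\<lambda>_. borel)) \<in> sets (PiM {..<n} (\<lambda>_. borel))"
      by (rule measurable_sets[OF rkm]) (use True in auto)
    moreover have "(\<lambda>\<omega>. rk n (\<lambda>i. \<omega> i)) -` {a} \<inter> space (PiM {..<n} (\<lambda>_. borel :: real measure)) = Sa"
      unfolding Sa_def by auto
    ultimately show ?thesis by simp
  qed
  have "col -` Sa \<inter> space M = {w \<in> space M. Rk s w = a}"
  proof -
    have "col w \<in> space (PiM {..<n} (\<lambda>_. borel :: real measure))" if "w \<in> space M" for w
      using measurable_space[OF colm that] .
    moreover have "rk n (col w) = Rk s w" for w unfolding Rk_def col_def by (rule rk_cong) simp
    ultimately show ?thesis unfolding Sa_def by auto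
  qed
  then have "prob {w \<in> space M. Rk s w = a} = measure (distr M (PiM {..<n} (\<lambda>_. borel)) col) Sa"
    using measure_distr[OF colm Sam] by simp
  also have "\<dots> = wt n a" using L unfolding D sp Sa_def .
  finally show ?thesis .
qed

lemma joint:
  assumes J: "J \<subseteq> {..<p}" "finite J" "J \<noteq> {}"
  shows "prob {w \<in> space M. \<forall>j\<in>J. Rk j w = c j} = (\<Prod>j\<in>J. wt n (c j))"
proof -
  have "prob (\<Inter>j\<in>J. Rk j -` ({c j} \<inter> Fn n) \<inter> space M) = (\<Prod>j\<in>J. prob (Rk j -` ({c j} \<inter> Fn n) \<inter> space M))"
    using J by (intro indep_varsD[OF Rk_indep]) auto
  moreover have "(\<Inter>j\<in>J. Rk j -` ({c j} \<inter> Fn n) \<inter> space M) = {w \<in> space M. \<forall>j\<in>J. Rk j w = c j}"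
    using J(3) Rk_Fn by auto
  moreover have "(\<Prod>j\<in>J. prob (Rk j -` ({c j} \<inter> Fn n) \<inter> space M)) = (\<Prod>j\<in>J. wt n (c j))"
  proof (rule prod.cong[OF refl])
    fix j assume j: "j \<in> J"
    have "Rk j -` ({c j} \<inter> Fn n) \<inter> space M = {w \<in> space M. Rk j w = c j}" using Rk_Fn by auto
    then show "prob (Rk j -` ({c j} \<inter> Fn n) \<inter> space M) = wt n (c j)" using Rk_law J(1) j by auto
  qed
  ultimately show ?thesis by simp
qed

lemma Epair:
  assumes st: "s < p" "t < p" "s \<noteq> t"
  shows "integrable M (\<lambda>w. F (Rk s w) (Rk t w))"
    and "(\<integral>w. F (Rk s w) (Rk t w) \<partial>M) = (\<Sum>a\<in>Fn n. \<Sum>b\<in>Fn n. F a b * wt n a * wt n b)"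
proof -
  define R where "R w = (Rk s w, Rk t w)" for w
  define V where "V = Fn n \<times> Fn n"
  have V: "finite V" unfolding V_def using finite_Fn by simp
  have RV: "R w \<in> V" for w unfolding R_def V_def using Rk_Fn by simp
  have pre: "{w \<in> space M. R w = (a, b)} = {w \<in> space M. \<forall>j\<in>{s, t}. Rk j w = (if j = s then a else b)}" for a b
    unfolding R_def using st by auto
  have ev: "{w \<in> space M. R w = v} \<in> events" if "v \<in> V" for v
  proof -
    obtain a b where v: "v = (a, b)" by (cases v)
    have "{w \<in> space M. R w = v} = {w \<in> space M. Rk s w = a} \<inter> {w \<in> space M. Rk t w = b}"
      unfolding v R_def by auto
    then show ?thesis using Rk_ev st by auto
  qed
  have pr: "prob {w \<in> space M. R w = (a, b)} = wt n a * wt n b" for a b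
    unfolding pre using joint[of "{s, t}" "\<lambda>j. if j = s then a else b"] st by simp
  show "integrable M (\<lambda>w. F (Rk s w) (Rk t w))"
    using E_fin(1)[OF V _ ev, where \<Phi>="\<lambda>(a, b). F a b"] RV unfolding R_def by simp
  have "(\<integral>w. F (Rk s w) (Rk t w) \<partial>M) = (\<Sum>v\<in>V. (\<lambda>(a, b). F a b) v * prob {w \<in> space M. R w = v})"
    using E_fin(2)[OF V _ ev, where \<Phi>="\<lambda>(a, b). F a b"] RV unfolding R_def by simp
  also have "\<dots> = (\<Sum>(a, b)\<in>Fn n \<times> Fn n. F a b * (wt n a * wt n b))"
    unfolding V_def by (rule sum.cong) (auto simp: pr)
  also have "\<dots> = (\<Sum>a\<in>Fn n. \<Sum>b\<in>Fn n. F a b * wt n a * wt n b)"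
    by (simp add: sum.cartesian_product[symmetric] mult.assoc)
  finally show "(\<integral>w. F (Rk s w) (Rk t w) \<partial>M) = (\<Sum>a\<in>Fn n. \<Sum>b\<in>Fn n. F a b * wt n a * wt n b)" .
qed

lemma Etriple:
  assumes st: "k < p" "a < p" "b < p" "k \<noteq> a" "k \<noteq> b" "a \<noteq> b"
  shows "integrable M (\<lambda>w. F (Rk k w) (Rk a w) (Rk b w))"
    and "(\<integral>w. F (Rk k w) (Rk a w) (Rk b w) \<partial>M) =
      (\<Sum>x\<in>Fn n. \<Sum>y\<in>Fn n. \<Sum>z\<in>Fn n. F x y z * wt n x * wt n y * wt n z)"
proof -
  define R where "R w = (Rk k w, Rk a w, Rk b w)" for w
  define V where "V = Fn n \<times> Fn n \<times> Fn n"
  have V: "finite V" unfolding V_def using finite_Fn by simp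
  have RV: "R w \<in> V" for w unfolding R_def V_def using Rk_Fn by simp
  have pre: "{w \<in> space M. R w = (x, y, z)} =
     {w \<in> space M. \<forall>j\<in>{k, a, b}. Rk j w = (if j = k then x else if j = a then y else z)}" for x y z
    unfolding R_def using st by auto
  have ev: "{w \<in> space M. R w = v} \<in> events" if "v \<in> V" for v
  proof -
    obtain x y z where v: "v = (x, y, z)" by (cases v) auto
    have "{w \<in> space M. R w = v} = {w \<in> space M. Rk k w = x} \<inter> {w \<in> space M. Rk a w = y} \<inter> {w \<in> space M. Rk b w = z}"
      unfolding v R_def by auto
    then show ?thesis using Rk_ev st by auto
  qed
  have pr: "prob {w \<in> space M. R w = (x, y, z)} = wt n x * wt n y * wt n z" for x y z
    unfolding pre using joint[of "{k, a, b}" "\<lambda>j. if j = k then x else if j = a then y else z"] st by simp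
  show "integrable M (\<lambda>w. F (Rk k w) (Rk a w) (Rk b w))"
    using E_fin(1)[OF V _ ev, where \<Phi>="\<lambda>(x, y, z). F x y z"] RV unfolding R_def by simp
  have "(\<integral>w. F (Rk k w) (Rk a w) (Rk b w) \<partial>M) = (\<Sum>v\<in>V. (\<lambda>(x, y, z). F x y z) v * prob {w \<in> space M. R w = v})"
    using E_fin(2)[OF V _ ev, where \<Phi>="\<lambda>(x, y, z). F x y z"] RV unfolding R_def by simp
  also have "\<dots> = (\<Sum>(x, y, z)\<in>Fn n \<times> Fn n \<times> Fn n. F x y z * (wt n x * wt n y * wt n z))"
    unfolding V_def by (rule sum.cong) (auto simp: pr)
  also have "\<dots> = (\<Sum>x\<in>Fn n. \<Sum>y\<in>Fn n. \<Sum>z\<in>Fn n. F x y z * wt n x * wt n y * wt n z)"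
    by (simp add: sum.cartesian_product[symmetric] mult.assoc)
  finally show "(\<integral>w. F (Rk k w) (Rk a w) (Rk b w) \<partial>M) =
      (\<Sum>x\<in>Fn n. \<Sum>y\<in>Fn n. \<Sum>z\<in>Fn n. F x y z * wt n x * wt n y * wt n z)" .
qed

lemma Equad:
  assumes st: "s < p" "t < p" "u < p" "v < p" "s \<noteq> t" "s \<noteq> u" "s \<noteq> v" "t \<noteq> u" "t \<noteq> v" "u \<noteq> v"
  shows "integrable M (\<lambda>w. F (Rk s w) (Rk t w) (Rk u w) (Rk v w))"
    and "(\<integral>w. F (Rk s w) (Rk t w) (Rk u w) (Rk v w) \<partial>M) =
      (\<Sum>a\<in>Fn n. \<Sum>b\<in>Fn n. \<Sum>c\<in>Fn n. \<Sum>d\<in>Fn n. F a b c d * wt n a * wt n b * wt n c * wt n d)"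
proof -
  define R where "R w = (Rk s w, Rk t w, Rk u w, Rk v w)" for w
  define V where "V = Fn n \<times> Fn n \<times> Fn n \<times> Fn n"
  have V: "finite V" unfolding V_def using finite_Fn by simp
  have RV: "R w \<in> V" for w unfolding R_def V_def using Rk_Fn by simp
  have pre: "{w \<in> space M. R w = (a, b, c, d)} =
     {w \<in> space M. \<forall>j\<in>{s, t, u, v}. Rk j w = (if j = s then a else if j = t then b else if j = u then c else d)}" for a b c d
    unfolding R_def using st by auto
  have ev: "{w \<in> space M. R w = x} \<in> events" if "x \<in> V" for x
  proof -
    obtain a b c d where x: "x = (a, b, c, d)" by (cases x) auto
    have "{w \<in> space M. R w = x} = {w \<in> space M. Rk s w = a} \<inter> {w \<in> space M. Rk t w = b}
       \<inter> {w \<in> space M. Rk u w = c} \<inter> {w \<in> space M. Rk v w = d}"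
      unfolding x R_def by auto
    then show ?thesis using Rk_ev st by auto
  qed
  have pr: "prob {w \<in> space M. R w = (a, b, c, d)} = wt n a * wt n b * wt n c * wt n d" for a b c d
    unfolding pre using joint[of "{s, t, u, v}" "\<lambda>j. if j = s then a else if j = t then b else if j = u then c else d"] st
    by (simp add: mult.assoc)
  show "integrable M (\<lambda>w. F (Rk s w) (Rk t w) (Rk u w) (Rk v w))"
    using E_fin(1)[OF V _ ev, where \<Phi>="\<lambda>(a, b, c, d). F a b c d"] RV unfolding R_def by simp
  have "(\<integral>w. F (Rk s w) (Rk t w) (Rk u w) (Rk v w) \<partial>M) = (\<Sum>x\<in>V. (\<lambda>(a, b, c, d). F a b c d) x * prob {w \<in> space M. R w = x})"
    using E_fin(2)[OF V _ ev, where \<Phi>="\<lambda>(a, b, c, d). F a b c d"] RV unfolding R_def by simp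
  also have "\<dots> = (\<Sum>(a, b, c, d)\<in>Fn n \<times> Fn n \<times> Fn n \<times> Fn n. F a b c d * (wt n a * wt n b * wt n c * wt n d))"
    unfolding V_def by (rule sum.cong) (auto simp: pr)
  also have "\<dots> = (\<Sum>a\<in>Fn n. \<Sum>b\<in>Fn n. \<Sum>c\<in>Fn n. \<Sum>d\<in>Fn n. F a b c d * wt n a * wt n b * wt n c * wt n d)"
    by (simp add: sum.cartesian_product[symmetric] mult.assoc)
  finally show "(\<integral>w. F (Rk s w) (Rk t w) (Rk u w) (Rk v w) \<partial>M) =
      (\<Sum>a\<in>Fn n. \<Sum>b\<in>Fn n. \<Sum>c\<in>Fn n. \<Sum>d\<in>Fn n. F a b c d * wt n a * wt n b * wt n c * wt n d)" .
qed

lemma cross_shared: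
  assumes G1: "invG n G1" and G2: "invG n G2"
    and st: "k < p" "a < p" "b < p" "k \<noteq> a" "k \<noteq> b" "a \<noteq> b"
  shows "integrable M (\<lambda>w. \<phi> (G1 (Rk k w) (Rk a w)) * \<psi> (G2 (Rk k w) (Rk b w)))"
    and "(\<integral>w. \<phi> (G1 (Rk k w) (Rk a w)) * \<psi> (G2 (Rk k w) (Rk b w)) \<partial>M) = E2 n G1 \<phi> * E2 n G2 \<psi>"
proof -
  show "integrable M (\<lambda>w. \<phi> (G1 (Rk k w) (Rk a w)) * \<psi> (G2 (Rk k w) (Rk b w)))"
    using Etriple(1)[OF st, of "\<lambda>x y z. \<phi> (G1 x y) * \<psi> (G2 x z)"] by simp
  show "(\<integral>w. \<phi> (G1 (Rk k w) (Rk a w)) * \<psi> (G2 (Rk k w) (Rk b w)) \<partial>M) = E2 n G1 \<phi> * E2 n G2 \<psi>"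
    using Etriple(2)[OF st, of "\<lambda>x y z. \<phi> (G1 x y) * \<psi> (G2 x z)"] shared_sum[OF G1 G2, of \<phi> \<psi>] by simp
qed

lemma cross:
  assumes G: "invG n G" and P: "(s, t) \<in> pairs p" and P': "(u, v) \<in> pairs p" and ne: "(s, t) \<noteq> (u, v)"
  shows "integrable M (\<lambda>w. \<phi> (G (Rk s w) (Rk t w)) * \<psi> (G (Rk u w) (Rk v w)))
    \<and> (\<integral>w. \<phi> (G (Rk s w) (Rk t w)) * \<psi> (G (Rk u w) (Rk v w)) \<partial>M) = E2 n G \<phi> * E2 n G \<psi>"
proof -
  have st: "s < t" "t < p" using P unfolding pairs_def by auto
  have uv: "u < v" "v < p" using P' unfolding pairs_def by auto
  have Gf: "invG n (\<lambda>x y. G y x)" by (rule invG_flip[OF G])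
  show ?thesis
  proof (cases "s = u")
    case True
    then have "t \<noteq> v" using ne by auto
    then show ?thesis using cross_shared[OF G G, of s t v \<phi> \<psi>] st uv True by auto
  next
    case su: False
    show ?thesis
    proof (cases "s = v")
      case True
      then show ?thesis using cross_shared[OF G Gf, of s t u \<phi> \<psi>] st uv E2_flip[of n G \<psi>] by auto
    next
      case sv: False
      show ?thesis
      proof (cases "t = u")
        case True
        then show ?thesis using cross_shared[OF Gf G, of t s v \<phi> \<psi>] st uv E2_flip[of n G \<phi>] by auto
      next
        case tu: False
        show ?thesis
        proof (cases "t = v")
          case True
          then show ?thesis using cross_shared[OF Gf Gf, of t s u \<phi> \<psi>] st uv su E2_flip[of n G \<phi>] E2_flip[of n G \<psi>] by auto
        next
          case tv: False
          have d: "s < p" "t < p" "u < p" "v < p" "s \<noteq> t" "s \<noteq> u" "s \<noteq> v" "t \<noteq> u" "t \<noteq> v" "u \<noteq> v"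
            using st uv su sv tu tv by auto
          show ?thesis
            using Equad(1)[OF d, of "\<lambda>a b c d. \<phi> (G a b) * \<psi> (G c d)"]
              Equad(2)[OF d, of "\<lambda>a b c d. \<phi> (G a b) * \<psi> (G c d)"] disjoint_sum[of \<phi> G \<psi> G n] by simp
        qed
      qed
    qed
  qed
qed

end

context rkset
begin

lemma main:
  fixes A :: "nat \<Rightarrow> nat \<Rightarrow> 'a \<Rightarrow> real" and G :: "(nat \<Rightarrow> nat) \<Rightarrow> (nat \<Rightarrow> nat) \<Rightarrow> real"
    and q q1 q2 :: nat
  assumes G: "invG n G" and AG0: "\<And>s t w. A s t w = G (rk n (\<lambda>i. X i s w)) (rk n (\<lambda>i. X i t w))"
    and p2: "2 \<le> p"
  shows "(\<integral>w. S_stat M A p q w \<partial>M) = 0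
    \<and> (\<integral>w. (S_stat M A p q w - (\<integral>v. S_stat M A p q v \<partial>M))\<^sup>2 \<partial>M)
        = real (p choose 2) * v_q M A q
    \<and> (\<integral>w. (S_stat M A p q1 w - (\<integral>v. S_stat M A p q1 v \<partial>M))
           * (S_stat M A p q2 w - (\<integral>v. S_stat M A p q2 v \<partial>M)) \<partial>M)
        = real (p choose 2) *
          ((\<integral>w. (centered M A 0 1 w) ^ (q1 + q2) \<partial>M)
           - (\<integral>w. (centered M A 0 1 w) ^ q1 \<partial>M) * (\<integral>w. (centered M A 0 1 w) ^ q2 \<partial>M))"
proof -
  have AG: "A s t w = G (Rk s w) (Rk t w)" for s t w unfolding Rk_def by (rule AG0)
  define \<mu> where "\<mu> = E2 n G (\<lambda>z. z)"
  define m where "m k = E2 n G (\<lambda>z. (z - \<mu>) ^ k)" for k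
  define T where "T k z = (z - \<mu>) ^ k - m k" for k z
  define AP where "AP P w = G (Rk (fst P) w) (Rk (snd P) w)" for P w
  have inP: "fst P < p" "snd P < p" "fst P \<noteq> snd P" if "P \<in> pairs p" for P
    using that unfolding pairs_def by auto
  have intP: "integrable M (\<lambda>w. \<phi> (AP P w)) \<and> (\<integral>w. \<phi> (AP P w) \<partial>M) = E2 n G \<phi>"
    if P: "P \<in> pairs p" for P \<phi>
    using Epair[OF inP[OF P], of "\<lambda>a b. \<phi> (G a b)"] unfolding AP_def E2_def by simp
  have P01: "(0, 1) \<in> pairs p" using p2 unfolding pairs_def by auto
  have EA: "(\<integral>v. A (fst P) (snd P) v \<partial>M) = \<mu>" if P: "P \<in> pairs p" for P
    using intP[OF P, of "\<lambda>z. z"] unfolding \<mu>_def AP_def AG by simp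
  have cent: "centered M A (fst P) (snd P) w = AP P w - \<mu>" if P: "P \<in> pairs p" for P w
    unfolding centered_def EA[OF P] AP_def AG ..
  have c01: "centered M A 0 1 w = AP (0, 1) w - \<mu>" for w using cent[OF P01, of w] by simp
  have cpow: "(\<integral>w. (centered M A 0 1 w) ^ k \<partial>M) = m k" for k
    using intP[OF P01, of "\<lambda>z. (z - \<mu>) ^ k"] unfolding c01 m_def by simp
  have mu: "mu_q M A k = m k" for k unfolding mu_q_def using cpow .
  have Seq: "S_stat M A p k w = (\<Sum>P\<in>pairs p. T k (AP P w))" for k w
    unfolding S_stat_def
  proof (rule sum.cong[OF refl])
    fix P assume P: "P \<in> pairs p"
    obtain s t where Pst: "P = (s, t)" by (cases P)
    show "(case P of (s, t) \<Rightarrow> centered M A s t w ^ k - mu_q M A k) = T k (AP P w)"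
      using cent[OF P, of w] unfolding Pst T_def mu by simp
  qed
  have ET: "E2 n G (T k) = 0" for k
  proof -
    have "E2 n G (T k) = E2 n G (\<lambda>z. (z - \<mu>) ^ k - m k)" unfolding T_def ..
    also have "\<dots> = E2 n G (\<lambda>z. (z - \<mu>) ^ k) - E2 n G (\<lambda>z. m k)" by (rule E2_diff)
    also have "\<dots> = 0" unfolding E2_const m_def by simp
    finally show ?thesis .
  qed
  have intT: "integrable M (\<lambda>w. T k (AP P w))" "(\<integral>w. T k (AP P w) \<partial>M) = 0" if P: "P \<in> pairs p" for P k
    using intP[OF P, of "T k"] ET[of k] by auto
  have ES: "(\<integral>w. S_stat M A p k w \<partial>M) = 0" for k
  proof -
    have "(\<integral>w. S_stat M A p k w \<partial>M) = (\<integral>w. (\<Sum>P\<in>pairs p. T k (AP P w)) \<partial>M)"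
      by (rule Bochner_Integration.integral_cong) (simp_all add: Seq)
    also have "\<dots> = (\<Sum>P\<in>pairs p. (\<integral>w. T k (AP P w) \<partial>M))"
      by (rule Bochner_Integration.integral_sum) (rule intT)
    also have "\<dots> = 0" using intT(2) by simp
    finally show ?thesis .
  qed
  have prodint: "integrable M (\<lambda>w. T k1 (AP P w) * T k2 (AP P' w))
      \<and> (\<integral>w. T k1 (AP P w) * T k2 (AP P' w) \<partial>M) = (if P = P' then E2 n G (\<lambda>z. T k1 z * T k2 z) else 0)"
    if P: "P \<in> pairs p" and P': "P' \<in> pairs p" for P P' k1 k2
  proof (cases "P = P'")
    case True
    then show ?thesis using intP[OF P, of "\<lambda>z. T k1 z * T k2 z"] by simp
  next
    case False
    obtain s t where Pst: "P = (s, t)" by (cases P)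
    obtain u v where Puv: "P' = (u, v)" by (cases P')
    have c: "integrable M (\<lambda>w. T k1 (AP P w) * T k2 (AP P' w))
      \<and> (\<integral>w. T k1 (AP P w) * T k2 (AP P' w) \<partial>M) = E2 n G (T k1) * E2 n G (T k2)"
      using cross[OF G P[unfolded Pst] P'[unfolded Puv], of "T k1" "T k2"] False
      unfolding Pst Puv AP_def by simp
    then show ?thesis using False ET[of k1] by simp
  qed
  have ESS: "(\<integral>w. S_stat M A p k1 w * S_stat M A p k2 w \<partial>M) = real (card (pairs p)) * E2 n G (\<lambda>z. T k1 z * T k2 z)"
    for k1 k2
  proof -
    have "(\<integral>w. S_stat M A p k1 w * S_stat M A p k2 w \<partial>M)
        = (\<integral>w. (\<Sum>P\<in>pairs p. \<Sum>P'\<in>pairs p. T k1 (AP P w) * T k2 (AP P' w)) \<partial>M)"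
      by (rule Bochner_Integration.integral_cong) (simp_all add: Seq sum_product)
    also have "\<dots> = (\<Sum>P\<in>pairs p. (\<integral>w. (\<Sum>P'\<in>pairs p. T k1 (AP P w) * T k2 (AP P' w)) \<partial>M))"
      by (rule Bochner_Integration.integral_sum) (intro Bochner_Integration.integrable_sum, use prodint in blast)
    also have "\<dots> = (\<Sum>P\<in>pairs p. \<Sum>P'\<in>pairs p. (\<integral>w. T k1 (AP P w) * T k2 (AP P' w) \<partial>M))"
      by (intro sum.cong refl Bochner_Integration.integral_sum) (use prodint in blast)
    also have "\<dots> = (\<Sum>P\<in>pairs p. \<Sum>P'\<in>pairs p. (if P = P' then E2 n G (\<lambda>z. T k1 z * T k2 z) else 0))"
      by (intro sum.cong refl) (use prodint in blast)
    also have "\<dots> = (\<Sum>P\<in>pairs p. E2 n G (\<lambda>z. T k1 z * T k2 z))"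
      by (intro sum.cong refl) (simp add: finite_pairs)
    also have "\<dots> = real (card (pairs p)) * E2 n G (\<lambda>z. T k1 z * T k2 z)" by simp
    finally show ?thesis .
  qed
  have TT: "E2 n G (\<lambda>z. T k1 z * T k2 z) = m (k1 + k2) - m k1 * m k2" for k1 k2
  proof -
    have "E2 n G (\<lambda>z. T k1 z * T k2 z) =
       E2 n G (\<lambda>z. ((z - \<mu>) ^ (k1 + k2) - m k2 * (z - \<mu>) ^ k1) - (m k1 * (z - \<mu>) ^ k2 - m k1 * m k2))"
      unfolding T_def by (rule arg_cong[where f="E2 n G"]) (simp add: fun_eq_iff power_add algebra_simps)
    also have "\<dots> = (m (k1 + k2) - m k2 * m k1) - (m k1 * m k2 - m k1 * m k2)"
      by (simp only: E2_diff E2_cmult E2_const m_def)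
    finally show ?thesis by simp
  qed
  have vq: "v_q M A q = E2 n G (\<lambda>z. T q z * T q z)"
  proof -
    have "v_q M A q = (\<integral>w. T q (AP (0, 1) w) * T q (AP (0, 1) w) \<partial>M)"
      unfolding v_q_def mu c01 T_def by (simp add: power2_eq_square)
    also have "\<dots> = E2 n G (\<lambda>z. T q z * T q z)" using intP[OF P01, of "\<lambda>z. T q z * T q z"] by simp
    finally show ?thesis .
  qed
  show ?thesis
    unfolding ES diff_zero power2_eq_square ESS cpow vq TT card_pairs by simp
qed

end

theorem proposition1:
  fixes M :: "'a measure" and X :: "nat \<Rightarrow> nat \<Rightarrow> 'a \<Rightarrow> real"
    and A :: "nat \<Rightarrow> nat \<Rightarrow> 'a \<Rightarrow> real" and n p q q1 q2 :: nat
  assumes "prob_space M"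
    and "1 \<le> n" and "2 \<le> p"
    and "\<forall>i<n. \<forall>s<p. X i s \<in> borel_measurable M"
    and "prob_space.indep_vars M (\<lambda>_. borel) (\<lambda>(i, s). X i s) ({..<n} \<times> {..<p})"
    and "\<forall>i<n. \<forall>s<p. distr M borel (X i s) = distr M borel (X 0 s)"
    and "\<forall>s<p. \<forall>x. measure M {w \<in> space M. X 0 s w = x} = 0"
    and "(\<exists>f g. A = V_stat f g X n)
         \<or> (\<exists>h m. kernel_class M X p m h 1 \<and> A = U_stat h m X n)
         \<or> (\<exists>h m. kernel_class M X p m h 2 \<and> A = U_stat h m X n)"
    and "even q" and "2 \<le> q"
    and "even q1" and "2 \<le> q1" and "even q2" and "2 \<le> q2"
  shows "(\<integral>w. S_stat M A p q w \<partial>M) = 0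
    \<and> (\<integral>w. (S_stat M A p q w - (\<integral>v. S_stat M A p q v \<partial>M))\<^sup>2 \<partial>M)
        = real (p choose 2) * v_q M A q
    \<and> (\<integral>w. (S_stat M A p q1 w - (\<integral>v. S_stat M A p q1 v \<partial>M))
           * (S_stat M A p q2 w - (\<integral>v. S_stat M A p q2 v \<partial>M)) \<partial>M)
        = real (p choose 2) *
          ((\<integral>w. (centered M A 0 1 w) ^ (q1 + q2) \<partial>M)
           - (\<integral>w. (centered M A 0 1 w) ^ q1 \<partial>M) * (\<integral>w. (centered M A 0 1 w) ^ q2 \<partial>M))"
  proof -
  have R: "rkset M X n p"
    unfolding rkset_def rkset_axioms_def using assms(1) assms(2) assms(4) assms(5) assms(6) assms(7) by blast
  obtain G where G: "invG n G"
    and AG: "\<And>s t w. A s t w = G (rk n (\<lambda>i. X i s w)) (rk n (\<lambda>i. X i t w))"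
  proof -
    consider (V) f g where "A = V_stat f g X n"
      | (U) h m d where "kernel_class M X p m h d" "A = U_stat h m X n"
      using assms(8) by blast
    then show ?thesis
    proof cases
      case V
      show ?thesis by (rule that[of "GV f g n"]) (simp_all add: invG_GV V_rep V)
    next
      case U
      have sym: "symmetric_kernel m h" and rb: "rank_based_kernel m h"
        using U(1) unfolding kernel_class_def by auto
      show ?thesis by (rule that[of "GU h m n"]) (simp_all add: invG_GU[OF sym] U_rep[OF rb] U(2))
    qed
  qed
  show ?thesis by (rule rkset.main[OF R G AG assms(3)])
qed

end
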